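(* Let $\Gamma$ be a gain operator on $\ell^\infty_+(\mathcal I)$ with $|\mathcal I|<\infty$ whose interconnection graph $\mathcal G$ is strongly connected. The following are equivalent: (a) there exists a path of strict decay for $\Gamma$; (b) there exists $\rho\in\mathcal K_\infty$ such that $\Gamma_\rho$ satisfies the NJI condition.
   Context: Let $\mathcal I$ be a nonempty countable index set; $\ell^\infty_+(\mathcal I)$ is the cone of nonnegative real families $s=(s_i)_{i\in\mathcal I}$ with $\|s\|:=\sup_i|s_i|<\infty$, ordered componentwise; $s>0$ means $s\ge0$, $s\ne0$; $\mathbf 1$ is the all-ones vector. $\mathcal K_\infty$: continuous strictly increasing unbounded $\gamma:\mathbb R_+\to\mathbb R_+$ with $\gamma(0)=0$, acting componentwise. For $\mathcal J\subset\mathcal I$, $s_{|\mathcal J}$ agrees with $s$ on $\mathcal J$ and is $0$ elsewhere. Gain operator: for each $i$ a finite (possibly empty) $\mathcal I_i\subset\mathcal I\setminus\{i\}$; directed graph $\mathcal G$ with vertices $\mathcal I$ and edges $ji$, $j\in\mathcal I_i$; a pointwise equicontinuous family $\gamma_{ij}\in\mathcal K_\infty$ ($ji\in E(\mathcal G)$); functions $\mu_i:\ell^\infty_+(\mathcal I)\to[0,\infty]$ with (M1) some $\xi\in\mathcal K_\infty$ has $\mu_i(0)=0$, $\mu_i(s)\ge\xi(\|s\|)$; (M2) $\mu_i$ monotone; (M3) for each finite $\mathcal J$, $\mu_i$ restricted to vectors vanishing off $\mathcal J$ is finite-valued and continuous; (M4) for each norm-bounded $A$ and $\varepsilon>0$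 there is $\delta>0$ with $\sup_i|\mu_i(s_{|\mathcal I_i})-\mu_i(s^0_{|\mathcal I_i})|\le\varepsilon$ whenever $s^0\in A$, $\|s-s^0\|\le\delta$. $\Gamma_i(s):=\mu_i([\gamma_{ij}(s_j)]_{j\in\mathcal I_i})$ (argument zero outside $\mathcal I_i$). $\Gamma_\rho:=(\mathrm{id}+\rho)\circ\Gamma$. $\mathcal G$ is strongly connected if for all $i,j$ there is a directed path from $i$ to $j$. $T$ satisfies the NJI condition if $T(s)\ge s$ fails for every $s>0$. A path of strict decay for $\Gamma$ is a map $\sigma:\mathbb R_+\to\ell^\infty_+(\mathcal I)$ such that: (i) for some $\rho\in\mathcal K_\infty$, $\Gamma_\rho(\sigma(r))\le\sigma(r)$ for all $r\ge0$; (ii) $\varphi_{\min}(r)\mathbf 1\le\sigma(r)\le\varphi_{\max}(r)\mathbf 1$ for some $\varphi_{\min},\varphi_{\max}\in\mathcal K_\infty$; (iii) each $\sigma_i\in\mathcal K_\infty$; (iv) for each compact $K\subset(0,\infty)$ there are $0<l\le L$ with $l|r_1-r_2|\le|\sigma_i^{-1}(r_1)-\sigma_i^{-1}(r_2)|\le L|r_1-r_2|$ for all $r_1,r_2\in K$, $i\in\mathcal I$. *)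

theory Defs
  imports "HOL-Analysis.Analysis"
begin

text \<open>The finite index set I is modelled by a finite type 'i (nonempty automatically).
 Elements of l-infinity_+ are nonnegative functions 'i => real.\<close>

definition nonneg :: "('i \<Rightarrow> real) \<Rightarrow> bool" where
  "nonneg s \<longleftrightarrow> (\<forall>i. 0 \<le> s i)"

definition supnorm :: "('i::finite \<Rightarrow> real) \<Rightarrow> real" where
  "supnorm s = Max (range (\<lambda>i. \<bar>s i\<bar>))"

definition restr :: "('i \<Rightarrow> real) \<Rightarrow> 'i set \<Rightarrow> ('i \<Rightarrow> real)" where
  "restr s J = (\<lambda>i. if i \<in> J then s i else 0)"

text \<open>Class K-infinity, functions on R_+ (values at negative arguments are irrelevant).\<close>
definition Kinf :: "(real \<Rightarrow> real) \<Rightarrow> bool" where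
  "Kinf g \<longleftrightarrow> continuous_on {0..} g \<and> strict_mono_on {0..} g \<and> g 0 = 0
      \<and> (\<forall>M. \<exists>r\<ge>0. M \<le> g r)"

text \<open>Gain operator data: neighbour sets Iset i (finite, not containing i), gains gam i j
  for edges j -> i, and monotone aggregation functions mu i with values in [0,\<infinity>].\<close>
definition gain_operator ::
  "('i::finite \<Rightarrow> 'i set) \<Rightarrow> ('i \<Rightarrow> 'i \<Rightarrow> real \<Rightarrow> real) \<Rightarrow> ('i \<Rightarrow> ('i \<Rightarrow> real) \<Rightarrow> ennreal) \<Rightarrow> bool"
  where
  "gain_operator Iset gam mu \<longleftrightarrow>
     (\<forall>i. finite (Iset i) \<and> i \<notin> Iset i)
   \<and> (\<forall>i. \<forall>j\<in>Iset i. Kinf (gam i j))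
   \<and> (\<forall>r\<ge>0. \<forall>\<epsilon>>0. \<exists>\<delta>>0. \<forall>i. \<forall>j\<in>Iset i. \<forall>r'\<ge>0.
          \<bar>r' - r\<bar> < \<delta> \<longrightarrow> \<bar>gam i j r' - gam i j r\<bar> < \<epsilon>)
   \<and> (\<exists>\<xi>. Kinf \<xi> \<and> (\<forall>i. mu i (\<lambda>_. 0) = 0 \<and>
          (\<forall>s. nonneg s \<longrightarrow> ennreal (\<xi> (supnorm s)) \<le> mu i s)))
   \<and> (\<forall>i s t. nonneg s \<and> nonneg t \<and> (\<forall>k. s k \<le> t k) \<longrightarrow> mu i s \<le> mu i t)
   \<and> (\<forall>i J. finite J \<longrightarrow>
          (\<forall>s. nonneg s \<and> (\<forall>k. k \<notin> J \<longrightarrow> s k = 0) \<longrightarrow> mu i s < \<infinity>)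
        \<and> (\<forall>s0. nonneg s0 \<and> (\<forall>k. k \<notin> J \<longrightarrow> s0 k = 0) \<longrightarrow>
             (\<forall>\<epsilon>>0. \<exists>\<delta>>0. \<forall>s. nonneg s \<and> (\<forall>k. k \<notin> J \<longrightarrow> s k = 0)
                 \<and> supnorm (\<lambda>k. s k - s0 k) < \<delta> \<longrightarrow>
                 \<bar>enn2real (mu i s) - enn2real (mu i s0)\<bar> < \<epsilon>)))
   \<and> (\<forall>A. (\<forall>s\<in>A. nonneg s) \<and> (\<exists>B. \<forall>s\<in>A. supnorm s \<le> B) \<longrightarrow>
          (\<forall>\<epsilon>>0. \<exists>\<delta>>0. \<forall>s0\<in>A. \<forall>s. nonneg s \<and> supnorm (\<lambda>k. s k - s0 k) \<le> \<delta> \<longrightarrow>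
              (\<forall>i. \<bar>enn2real (mu i (restr s (Iset i))) - enn2real (mu i (restr s0 (Iset i)))\<bar> \<le> \<epsilon>)))"

text \<open>Gamma_i(s) = mu_i([gam_ij(s_j)]_{j in I_i}); finite by (M3).\<close>
definition Gam ::
  "('i \<Rightarrow> 'i set) \<Rightarrow> ('i \<Rightarrow> 'i \<Rightarrow> real \<Rightarrow> real) \<Rightarrow> ('i \<Rightarrow> ('i \<Rightarrow> real) \<Rightarrow> ennreal)
     \<Rightarrow> ('i \<Rightarrow> real) \<Rightarrow> ('i \<Rightarrow> real)" where
  "Gam Iset gam mu s = (\<lambda>i. enn2real (mu i (\<lambda>j. if j \<in> Iset i then gam i j (s j) else 0)))"

definition Gam_rho ::
  "(real \<Rightarrow> real) \<Rightarrow> ('i \<Rightarrow> 'i set) \<Rightarrow> ('i \<Rightarrow> 'i \<Rightarrow> real \<Rightarrow> real) \<Rightarrow> ('i \<Rightarrow> ('i \<Rightarrow> real) \<Rightarrow> ennreal)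
     \<Rightarrow> ('i \<Rightarrow> real) \<Rightarrow> ('i \<Rightarrow> real)" where
  "Gam_rho \<rho> Iset gam mu s = (\<lambda>i. Gam Iset gam mu s i + \<rho> (Gam Iset gam mu s i))"

text \<open>Interconnection graph: edge j -> i iff j in Iset i.\<close>
definition strongly_connected :: "('i \<Rightarrow> 'i set) \<Rightarrow> bool" where
  "strongly_connected Iset \<longleftrightarrow> (\<forall>i j. (i, j) \<in> {(a, b). a \<in> Iset b}\<^sup>*)"

definition NJI :: "(('i \<Rightarrow> real) \<Rightarrow> ('i \<Rightarrow> real)) \<Rightarrow> bool" where
  "NJI T \<longleftrightarrow> \<not> (\<exists>s. nonneg s \<and> s \<noteq> (\<lambda>_. 0) \<and> (\<forall>i. s i \<le> T s i))"

definition path_strict_decay ::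
  "('i \<Rightarrow> 'i set) \<Rightarrow> ('i \<Rightarrow> 'i \<Rightarrow> real \<Rightarrow> real) \<Rightarrow> ('i \<Rightarrow> ('i \<Rightarrow> real) \<Rightarrow> ennreal)
     \<Rightarrow> (real \<Rightarrow> 'i \<Rightarrow> real) \<Rightarrow> bool" where
  "path_strict_decay Iset gam mu \<sigma> \<longleftrightarrow>
     (\<exists>\<rho>. Kinf \<rho> \<and> (\<forall>r\<ge>0. \<forall>i. Gam_rho \<rho> Iset gam mu (\<sigma> r) i \<le> \<sigma> r i))
   \<and> (\<exists>\<phi>min \<phi>max. Kinf \<phi>min \<and> Kinf \<phi>max \<and>
        (\<forall>r\<ge>0. \<forall>i. \<phi>min r \<le> \<sigma> r i \<and> \<sigma> r i \<le> \<phi>max r))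
   \<and> (\<forall>i. Kinf (\<lambda>r. \<sigma> r i))
   \<and> (\<forall>K. compact K \<and> K \<subseteq> {0<..} \<longrightarrow>
        (\<exists>l L. 0 < l \<and> l \<le> L \<and> (\<forall>r1\<in>K. \<forall>r2\<in>K. \<forall>i.
           l * \<bar>r1 - r2\<bar> \<le> \<bar>the_inv_into {0..} (\<lambda>r. \<sigma> r i) r1 - the_inv_into {0..} (\<lambda>r. \<sigma> r i) r2\<bar>
         \<and> \<bar>the_inv_into {0..} (\<lambda>r. \<sigma> r i) r1 - the_inv_into {0..} (\<lambda>r. \<sigma> r i) r2\<bar> \<le> L * \<bar>r1 - r2\<bar>)))"

end

theory Submission
  imports Defs
begin

section \<open>Kinf basics\<close>

lemma Kinf_D:
  assumes "Kinf g"
  shows "continuous_on {0..} g" "g 0 = 0" "\<And>x y. 0 \<le> x \<Longrightarrow> x < y \<Longrightarrow> g x < g y"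
    "\<And>M. \<exists>r\<ge>0. M \<le> g r"
  using assms unfolding Kinf_def strict_mono_on_def monotone_on_def by auto

lemma Kinf_less: "Kinf g \<Longrightarrow> 0 \<le> x \<Longrightarrow> x < y \<Longrightarrow> g x < g y"
  using Kinf_D(3) by blast

lemma Kinf_mono: "Kinf g \<Longrightarrow> 0 \<le> x \<Longrightarrow> x \<le> y \<Longrightarrow> g x \<le> g y"
  using Kinf_less[of g x y] by (cases "x = y") auto

lemma Kinf_nonneg: "Kinf g \<Longrightarrow> 0 \<le> x \<Longrightarrow> 0 \<le> g x"
  using Kinf_mono[of g 0 x] Kinf_D(2)[of g] by auto

lemma Kinf_pos: "Kinf g \<Longrightarrow> 0 < x \<Longrightarrow> 0 < g x"
  using Kinf_less[of g 0 x] Kinf_D(2)[of g] by auto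

lemma Kinf_zero_iff: "Kinf g \<Longrightarrow> 0 \<le> x \<Longrightarrow> g x = 0 \<longleftrightarrow> x = 0"
  using Kinf_pos[of g x] Kinf_D(2)[of g] by fastforce

lemma Kinf_le_iff: "Kinf g \<Longrightarrow> 0 \<le> x \<Longrightarrow> 0 \<le> y \<Longrightarrow> g x \<le> g y \<longleftrightarrow> x \<le> y"
  using Kinf_less[of g y x] Kinf_mono[of g x y] by force

lemma Kinf_cont:
  assumes "Kinf g" "0 \<le> x" "e > 0"
  shows "\<exists>d>0. \<forall>y\<ge>0. \<bar>y - x\<bar> < d \<longrightarrow> \<bar>g y - g x\<bar> < e"
proof -
  have "continuous_on {0..} g" using Kinf_D[OF assms(1)] by simp
  then show ?thesis using assms(2,3) unfolding continuous_on_iff dist_real_def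
    by (metis atLeast_iff)
qed

lemma Kinf_scale: "Kinf g \<Longrightarrow> c > 0 \<Longrightarrow> Kinf (\<lambda>x. c * g x)"
proof -
  assume g: "Kinf g" and c: "c > 0"
  have "continuous_on {0..} (\<lambda>x. c * g x)"
    using Kinf_D(1)[OF g] by (intro continuous_intros)
  moreover have "strict_mono_on {0..} (\<lambda>x. c * g x)"
    using Kinf_less[OF g] c by (auto simp: strict_mono_on_def monotone_on_def)
  moreover have "\<exists>r\<ge>0. M \<le> c * g r" for M
  proof -
    obtain r where "r \<ge> 0" "M / c \<le> g r" using Kinf_D(4)[OF g] by blast
    then show ?thesis using c by (intro exI[of _ r]) (auto simp: field_simps)
  qed
  ultimately show ?thesis using Kinf_D(2)[OF g] unfolding Kinf_def by auto
qed

lemma Kinf_surj: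
  assumes "Kinf g" "0 \<le> y"
  shows "\<exists>x\<ge>0. g x = y"
proof -
  obtain R where R: "R \<ge> 0" "y \<le> g R" using Kinf_D(4)[OF assms(1)] by blast
  have "continuous_on {0..R} g" using Kinf_D(1)[OF assms(1)]
    by (rule continuous_on_subset) auto
  then obtain x where "0 \<le> x" "x \<le> R" "g x = y"
    using IVT'[of g 0 y R] R assms Kinf_D(2)[OF assms(1)] by auto
  then show ?thesis by auto
qed

lemma supnorm_ge: "\<bar>s i\<bar> \<le> supnorm s"
  unfolding supnorm_def by (rule Max_ge) auto

lemma supnorm_less: "(\<And>i. \<bar>s i\<bar> < d) \<Longrightarrow> supnorm (s::'i::finite \<Rightarrow> real) < d"
  unfolding supnorm_def by (subst Max_less_iff) auto

lemma supnorm_le: "(\<And>i. \<bar>s i\<bar> \<le> d) \<Longrightarrow> supnorm (s::'i::finite \<Rightarrow> real) \<le> d"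
  unfolding supnorm_def by (subst Max_le_iff) auto

lemma supnorm_nonneg: "0 \<le> supnorm s"
  using supnorm_ge[of s] abs_ge_zero order_trans by blast


locale GS =
  fixes Iset :: "'i::finite \<Rightarrow> 'i set" and gam :: "'i \<Rightarrow> 'i \<Rightarrow> real \<Rightarrow> real"
    and mu :: "'i \<Rightarrow> ('i \<Rightarrow> real) \<Rightarrow> ennreal"
  assumes go: "gain_operator Iset gam mu"
begin

abbreviation G where "G \<equiv> Gam Iset gam mu"

definition gv :: "('i \<Rightarrow> real) \<Rightarrow> 'i \<Rightarrow> 'i \<Rightarrow> real" where
  "gv s i = (\<lambda>j. if j \<in> Iset i then gam i j (s j) else 0)"

lemma G_def': "G s i = enn2real (mu i (gv s i))"
  unfolding Gam_def gv_def by simp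

lemmas go' = go[unfolded gain_operator_def]
lemmas go1 = go'[THEN conjunct1]
lemmas go2 = go'[THEN conjunct2, THEN conjunct1]
lemmas go4 = go'[THEN conjunct2, THEN conjunct2, THEN conjunct2, THEN conjunct1]
lemmas go5 = go'[THEN conjunct2, THEN conjunct2, THEN conjunct2, THEN conjunct2, THEN conjunct1]
lemmas go6 = go'[THEN conjunct2, THEN conjunct2, THEN conjunct2, THEN conjunct2, THEN conjunct2, THEN conjunct1]

lemma Iset_irrefl: "i \<notin> Iset i" using go1 by blast

lemma gam_Kinf: "j \<in> Iset i \<Longrightarrow> Kinf (gam i j)" using go2 by blast

lemma xi_ex: "\<exists>\<xi>. Kinf \<xi> \<and> (\<forall>i. mu i (\<lambda>_. 0) = 0 \<and>
          (\<forall>s. nonneg s \<longrightarrow> ennreal (\<xi> (supnorm s)) \<le> mu i s))"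
  by (rule go4)

definition "xi = (SOME \<xi>. Kinf \<xi> \<and> (\<forall>i. mu i (\<lambda>_. 0) = 0 \<and>
          (\<forall>s. nonneg s \<longrightarrow> ennreal (\<xi> (supnorm s)) \<le> mu i s)))"

lemma xi_all: "Kinf xi \<and> (\<forall>i. mu i (\<lambda>_. 0) = 0 \<and>
          (\<forall>s. nonneg s \<longrightarrow> ennreal (xi (supnorm s)) \<le> mu i s))"
  unfolding xi_def by (rule someI_ex[OF xi_ex])

lemma xi: "Kinf xi" "mu i (\<lambda>_. 0) = 0" "nonneg s \<Longrightarrow> ennreal (xi (supnorm s)) \<le> mu i s"
  using xi_all by blast+

lemma mu_mono: "nonneg s \<Longrightarrow> nonneg t \<Longrightarrow> (\<And>k. s k \<le> t k) \<Longrightarrow> mu i s \<le> mu i t"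
  using go5 by blast

lemma go6': "(\<forall>s. nonneg s \<and> (\<forall>k. k \<notin> (UNIV::'i set) \<longrightarrow> s k = 0) \<longrightarrow> mu i s < \<infinity>)
        \<and> (\<forall>s0. nonneg s0 \<and> (\<forall>k. k \<notin> (UNIV::'i set) \<longrightarrow> s0 k = 0) \<longrightarrow>
             (\<forall>\<epsilon>>0. \<exists>\<delta>>0. \<forall>s. nonneg s \<and> (\<forall>k. k \<notin> (UNIV::'i set) \<longrightarrow> s k = 0)
                 \<and> supnorm (\<lambda>k. s k - s0 k) < \<delta> \<longrightarrow>
                 \<bar>enn2real (mu i s) - enn2real (mu i s0)\<bar> < \<epsilon>))"
  using go6[rule_format, of UNIV i] by simp

lemma mu_fin: "nonneg s \<Longrightarrow> mu i s < \<infinity>"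
  using go6'[of i] by simp

lemma mu_cont: "nonneg s0 \<Longrightarrow> e > 0 \<Longrightarrow> \<exists>d>0. \<forall>s. nonneg s \<and> supnorm (\<lambda>k. s k - s0 k) < d \<longrightarrow>
                 \<bar>enn2real (mu i s) - enn2real (mu i s0)\<bar> < e"
  using go6'[of i] by simp

lemma gv_nonneg: "nonneg s \<Longrightarrow> nonneg (gv s i)"
  unfolding nonneg_def gv_def using gam_Kinf Kinf_nonneg by auto

lemma gv_mono: "nonneg s \<Longrightarrow> (\<And>k. s k \<le> t k) \<Longrightarrow> gv s i k \<le> gv t i k"
  unfolding nonneg_def gv_def using gam_Kinf Kinf_mono by auto

lemma G_nonneg: "0 \<le> G s i"
  unfolding G_def' by simp

lemma G_mono: "nonneg s \<Longrightarrow> (\<And>k. s k \<le> t k) \<Longrightarrow> G s i \<le> G t i"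
proof -
  assume s: "nonneg s" and st: "\<And>k. s k \<le> t k"
  have t: "nonneg t" using s st unfolding nonneg_def by (meson order_trans)
  have "mu i (gv s i) \<le> mu i (gv t i)"
    by (rule mu_mono) (auto intro: gv_nonneg s t gv_mono st)
  then show ?thesis unfolding G_def' using mu_fin[OF gv_nonneg[OF t]]
    by (simp add: enn2real_mono)
qed

lemma G_zero: "G (\<lambda>_. 0) i = 0"
proof -
  have "gv (\<lambda>_. 0) i = (\<lambda>_. 0)" unfolding gv_def using gam_Kinf Kinf_D(2) by auto
  then show ?thesis unfolding G_def' using xi(2) by simp
qed

lemma G_empty: "Iset i = {} \<Longrightarrow> G s i = 0"
proof -
  assume "Iset i = {}"
  then have "gv s i = (\<lambda>_. 0)" unfolding gv_def by auto
  then show ?thesis unfolding G_def' using xi(2) by simp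
qed

lemma G_lower: "nonneg s \<Longrightarrow> a \<in> Iset i \<Longrightarrow> xi (gam i a (s a)) \<le> G s i"
proof -
  assume s: "nonneg s" and a: "a \<in> Iset i"
  have sa: "0 \<le> s a" using s unfolding nonneg_def by auto
  have g0: "0 \<le> gam i a (s a)" using Kinf_nonneg[OF gam_Kinf[OF a] sa] .
  have "gam i a (s a) = \<bar>gv s i a\<bar>" using a g0 unfolding gv_def by simp
  also have "\<dots> \<le> supnorm (gv s i)" by (rule supnorm_ge)
  finally have "xi (gam i a (s a)) \<le> xi (supnorm (gv s i))"
    using Kinf_mono[OF xi(1) g0] by blast
  also have "xi (supnorm (gv s i)) \<le> enn2real (mu i (gv s i))"
  proof -
    have "ennreal (xi (supnorm (gv s i))) \<le> mu i (gv s i)" by (rule xi(3)[OF gv_nonneg[OF s]])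
    then have "enn2real (ennreal (xi (supnorm (gv s i)))) \<le> enn2real (mu i (gv s i))"
      using mu_fin[OF gv_nonneg[OF s]] by (intro enn2real_mono) auto
    moreover have "0 \<le> xi (supnorm (gv s i))" using Kinf_nonneg[OF xi(1) supnorm_nonneg] .
    ultimately show ?thesis by simp
  qed
  finally show ?thesis unfolding G_def' .
qed

lemma G_cont:
  assumes s0: "nonneg s0" and e: "e > 0"
  shows "\<exists>d>0. \<forall>s. nonneg s \<and> (\<forall>k. \<bar>s k - s0 k\<bar> < d) \<longrightarrow> (\<forall>i. \<bar>G s i - G s0 i\<bar> < e)"
proof -
  have ex: "\<exists>d>0. \<forall>s. nonneg s \<and> (\<forall>k. \<bar>s k - s0 k\<bar> < d) \<longrightarrow> \<bar>G s i - G s0 i\<bar> < e" for i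
  proof -
    obtain d1 where d1: "d1 > 0" "\<And>s. nonneg s \<Longrightarrow> supnorm (\<lambda>k. s k - gv s0 i k) < d1 \<Longrightarrow>
       \<bar>enn2real (mu i s) - enn2real (mu i (gv s0 i))\<bar> < e"
      using mu_cont[OF gv_nonneg[OF s0] e, of i] by blast
    have ex: "\<exists>d>0. \<forall>y\<ge>0. \<bar>y - s0 k\<bar> < d \<longrightarrow> \<bar>gv (\<lambda>_. y) i k - gv s0 i k\<bar> < d1" for k
    proof (cases "k \<in> Iset i")
      case True
      then show ?thesis using Kinf_cont[OF gam_Kinf[OF True], of "s0 k" d1] s0 d1(1)
        unfolding gv_def nonneg_def by auto
    next
      case False
      then show ?thesis using d1(1) unfolding gv_def by (intro exI[of _ 1]) auto
    qed
    obtain dk where dk0: "\<forall>k. dk k > 0 \<and> (\<forall>y\<ge>0. \<bar>y - s0 k\<bar> < dk k \<longrightarrow> \<bar>gv (\<lambda>_. y) i k - gv s0 i k\<bar> < d1)"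
      using choice[of "\<lambda>k d. d > 0 \<and> (\<forall>y\<ge>0. \<bar>y - s0 k\<bar> < d \<longrightarrow> \<bar>gv (\<lambda>_. y) i k - gv s0 i k\<bar> < d1)"] ex by blast
    have dk: "\<And>k. dk k > 0"
      "\<And>k y. y \<ge> 0 \<Longrightarrow> \<bar>y - s0 k\<bar> < dk k \<Longrightarrow> \<bar>gv (\<lambda>_. y) i k - gv s0 i k\<bar> < d1"
      using dk0 by auto
    define d where "d = Min (range dk)"
    have d: "d > 0" unfolding d_def using dk(1) by (subst Min_gr_iff) auto
    have dle: "d \<le> dk k" for k unfolding d_def by (rule Min_le) auto
    show ?thesis
    proof (intro exI[of _ d] conjI allI impI)
      fix s assume s: "nonneg s \<and> (\<forall>k. \<bar>s k - s0 k\<bar> < d)"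
      have "\<bar>gv s i k - gv s0 i k\<bar> < d1" for k
      proof -
        have "gv s i k = gv (\<lambda>_. s k) i k" unfolding gv_def by simp
        moreover have "0 \<le> s k" using s unfolding nonneg_def by auto
        moreover have "\<bar>s k - s0 k\<bar> < dk k"
        proof -
          have "\<bar>s k - s0 k\<bar> < d" using s by blast
          then show ?thesis using dle[of k] by linarith
        qed
        ultimately show ?thesis using dk(2)[of "s k" k] by simp
      qed
      then have "supnorm (\<lambda>k. gv s i k - gv s0 i k) < d1" by (intro supnorm_less) auto
      then show "\<bar>G s i - G s0 i\<bar> < e" unfolding G_def' using d1(2)[OF gv_nonneg] s by auto
    qed (rule d)
  qed
  obtain di where di0: "\<forall>i. di i > 0 \<and> (\<forall>s. nonneg s \<and> (\<forall>k. \<bar>s k - s0 k\<bar> < di i) \<longrightarrow> \<bar>G s i - G s0 i\<bar> < e)"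
    using choice[of "\<lambda>i d. d > 0 \<and> (\<forall>s. nonneg s \<and> (\<forall>k. \<bar>s k - s0 k\<bar> < d) \<longrightarrow> \<bar>G s i - G s0 i\<bar> < e)"] ex by blast
  have di: "\<And>i. di i > 0"
    "\<And>i s. nonneg s \<Longrightarrow> (\<forall>k. \<bar>s k - s0 k\<bar> < di i) \<Longrightarrow> \<bar>G s i - G s0 i\<bar> < e" using di0 by auto
  define d where "d = Min (range di)"
  have d: "d > 0" unfolding d_def using di(1) by (subst Min_gr_iff) auto
  have dle: "d \<le> di k" for k unfolding d_def by (rule Min_le) auto
  show ?thesis
  proof (intro exI[of _ d] conjI allI impI)
    fix s i assume as: "nonneg s \<and> (\<forall>k. \<bar>s k - s0 k\<bar> < d)"
    have "\<forall>k. \<bar>s k - s0 k\<bar> < di i"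
    proof
      fix k have "\<bar>s k - s0 k\<bar> < d" using as by blast
      then show "\<bar>s k - s0 k\<bar> < di i" using dle[of i] by linarith
    qed
    then show "\<bar>G s i - G s0 i\<bar> < e" using di(2)[of s i] as by blast
  qed (rule d)
qed

end

lemma brouwer_decay:
  fixes F :: "('i::finite \<Rightarrow> real) \<Rightarrow> 'i \<Rightarrow> real"
  assumes Fcont: "\<And>s0 e. nonneg s0 \<Longrightarrow> e > 0 \<Longrightarrow> \<exists>d>0. \<forall>s. nonneg s \<and> (\<forall>k. \<bar>s k - s0 k\<bar> < d) \<longrightarrow> (\<forall>i. \<bar>F s i - F s0 i\<bar> < e)"
    and Fnn: "\<And>s i. nonneg s \<Longrightarrow> 0 \<le> F s i"
    and nji: "\<And>s. nonneg s \<Longrightarrow> (\<forall>i. s i \<le> F s i) \<Longrightarrow> s = (\<lambda>_. 0)"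
    and R: "R > 0"
  shows "\<exists>s. nonneg s \<and> sum s UNIV = R \<and> (\<forall>i. F s i \<le> s i)"
proof -
  define S where "S = {v::real^'i. (\<forall>i. 0 \<le> v$i) \<and> sum (\<lambda>i. v$i) UNIV = R}"
  define m where "m v i = max (F (($) v) i) (v$i)" for v :: "real^'i" and i
  define f where "f v = (\<chi> i. R * m v i / sum (m v) UNIV)" for v
  have closedS: "closed S"
  proof -
    have "S = {v::real^'i. \<forall>i. 0 \<le> v$i} \<inter> {v. sum (\<lambda>i. v$i) UNIV = R}" unfolding S_def by auto
    moreover have "closed {v::real^'i. sum (\<lambda>i. v$i) UNIV = R}"
      by (intro closed_Collect_eq continuous_intros)
    ultimately show ?thesis using closed_positive_orthant by auto
  qed
  have boundedS: "bounded S"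
  proof -
    have "norm v \<le> R" if "v \<in> S" for v
    proof -
      have "norm v \<le> sum (\<lambda>i. \<bar>v$i\<bar>) UNIV" by (rule norm_le_l1_cart)
      also have "\<dots> = R" using that unfolding S_def by auto
      finally show ?thesis .
    qed
    then show ?thesis unfolding bounded_iff by blast
  qed
  have compactS: "compact S" using closedS boundedS by (simp add: compact_eq_bounded_closed)
  have convexS: "convex S"
  proof (rule convexI)
    fix x y :: "real^'i" and u v :: real
    assume xy: "x \<in> S" "y \<in> S" and uv: "0 \<le> u" "0 \<le> v" "u + v = 1"
    have "sum (\<lambda>i. (u *\<^sub>R x + v *\<^sub>R y)$i) UNIV = u * sum (\<lambda>i. x$i) UNIV + v * sum (\<lambda>i. y$i) UNIV"
      by (simp add: sum.distrib sum_distrib_left)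
    also have "\<dots> = u * R + v * R" using xy unfolding S_def by simp
    also have "\<dots> = (u + v) * R" by (simp add: algebra_simps)
    also have "\<dots> = R" using uv(3) by simp
    finally show "u *\<^sub>R x + v *\<^sub>R y \<in> S" using xy uv unfolding S_def by auto
  qed
  have neS: "S \<noteq> {}"
  proof -
    have "(\<chi> i. R / real CARD('i)) \<in> S" unfolding S_def using R by auto
    then show ?thesis by auto
  qed
  have nnS: "nonneg (($) v)" if "v \<in> S" for v using that unfolding S_def nonneg_def by auto
  have contF: "continuous_on S (\<lambda>v. F (($) v) i)" for i
    unfolding continuous_on_iff
  proof (intro ballI allI impI)
    fix x e assume x: "x \<in> S" and e: "(0::real) < e"
    obtain d where d: "d > 0" "\<And>s. nonneg s \<Longrightarrow> (\<forall>k. \<bar>s k - x$k\<bar> < d) \<Longrightarrow> (\<forall>i. \<bar>F s i - F (($) x) i\<bar> < e)"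
      using Fcont[OF nnS[OF x] e] by blast
    show "\<exists>d>0. \<forall>x'\<in>S. dist x' x < d \<longrightarrow> dist (F (($) x') i) (F (($) x) i) < e"
    proof (intro exI[of _ d] conjI ballI impI)
      fix x' assume x': "x' \<in> S" "dist x' x < d"
      have "\<forall>k. \<bar>x'$k - x$k\<bar> < d"
      proof
        fix k
        have "\<bar>x'$k - x$k\<bar> = \<bar>(x' - x)$k\<bar>" by simp
        also have "\<dots> \<le> norm (x' - x)" by (rule component_le_norm_cart)
        finally show "\<bar>x'$k - x$k\<bar> < d" using x'(2) by (simp add: dist_norm)
      qed
      then show "dist (F (($) x') i) (F (($) x) i) < e" using d(2)[OF nnS[OF x'(1)]] by (simp add: dist_real_def)
    qed (rule d(1))
  qed
  have contm: "continuous_on S (\<lambda>v. m v i)" for i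
    unfolding m_def by (intro continuous_intros contF)
  have sum_ge: "sum (m v) UNIV \<ge> R" if "v \<in> S" for v
  proof -
    have "sum (\<lambda>i. v$i) UNIV \<le> sum (m v) UNIV" by (rule sum_mono) (simp add: m_def)
    then show ?thesis using that unfolding S_def by auto
  qed
  have contf: "continuous_on S f"
    unfolding f_def
  proof (intro continuous_on_vec_lambda continuous_on_divide continuous_intros contm)
    show "\<forall>x\<in>S. sum (m x) UNIV \<noteq> 0" using sum_ge R by force
  qed
  have fS: "f \<in> S \<rightarrow> S"
  proof
    fix v assume v: "v \<in> S"
    have pos: "sum (m v) UNIV > 0" using sum_ge[OF v] R by linarith
    have "0 \<le> m v i" for i
    proof -
      have "0 \<le> v$i" using v unfolding S_def by auto
      moreover have "v$i \<le> m v i" by (simp add: m_def)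
      ultimately show ?thesis by linarith
    qed
    then have "\<forall>i. 0 \<le> f v $ i" unfolding f_def using pos R by auto
    moreover have "sum (\<lambda>i. f v $ i) UNIV = R"
      unfolding f_def using pos by (simp add: sum_divide_distrib[symmetric] sum_distrib_left[symmetric])
    ultimately show "f v \<in> S" unfolding S_def by auto
  qed
  obtain v where v: "v \<in> S" "f v = v" using brouwer[OF compactS convexS neS contf fS] by blast
  define s where "s = (($) v)"
  have s: "nonneg s" "sum s UNIV = R" using v(1) unfolding s_def S_def nonneg_def by auto
  have "\<forall>i. F s i \<le> s i"
  proof (rule ccontr)
    assume "\<not> (\<forall>i. F s i \<le> s i)"
    then obtain i0 where i0: "F s i0 > s i0" by (auto simp: not_le)
    define c where "c = sum (m v) UNIV / R"
    have "sum (\<lambda>i. v$i) UNIV < sum (m v) UNIV"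
    proof (rule sum_strict_mono_ex1)
      show "\<exists>a\<in>UNIV. v $ a < m v a" using i0 unfolding m_def s_def
        by (intro bexI[of _ i0]) (auto simp: max_def)
    qed (auto simp: m_def)
    then have c1: "c > 1" using v(1) R unfolding c_def S_def by auto
    have pos: "sum (m v) UNIV > 0" using sum_ge[OF v(1)] R by linarith
    have mk: "m v k = c * s k" for k
    proof -
      have "f v $ k = v $ k" using v(2) by simp
      then have "R * m v k / sum (m v) UNIV = s k" unfolding f_def s_def by simp
      then show ?thesis unfolding c_def using pos R by (simp add: field_simps)
    qed
    have "s k \<le> F s k" for k
    proof (cases "s k > 0")
      case True
      then have gt: "m v k > s k" using mk[of k] c1 by (simp add: mult_less_cancel_right1)
      then have "m v k = F s k" unfolding m_def s_def by (auto simp: max_def split: if_splits)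
      then show ?thesis using gt by linarith
    next
      case False
      moreover have "0 \<le> s k" using s(1) unfolding nonneg_def by auto
      ultimately have "s k = 0" by linarith
      then show ?thesis using Fnn[OF s(1)] by simp
    qed
    then have "s = (\<lambda>_. 0)" using nji[OF s(1)] by blast
    then show False using s(2) R by simp
  qed
  then show ?thesis using s by blast
qed


lemma exists_big_comp:
  fixes s :: "'i::finite \<Rightarrow> real"
  shows "\<exists>j. sum s UNIV \<le> real CARD('i) * s j"
proof -
  have "Max (range s) \<in> range s" by (rule Max_in) auto
  then obtain j where jm: "Max (range s) = s j" by (rule rangeE)
  have j: "\<forall>k. s k \<le> s j" unfolding jm[symmetric] by (auto intro: Max_ge)
  have "sum s UNIV \<le> of_nat (card (UNIV::'i set)) * s j" using j by (intro sum_bounded_above) auto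
  then show ?thesis by auto
qed

locale GSN = GS Iset gam mu for Iset :: "'i::finite \<Rightarrow> 'i set" and gam mu +
  fixes \<rho> :: "real \<Rightarrow> real"
  assumes rho: "Kinf \<rho>" and nji: "NJI (Gam_rho \<rho> Iset gam mu)" and sc: "strongly_connected Iset"
begin

definition T :: "real \<Rightarrow> ('i \<Rightarrow> real) \<Rightarrow> 'i \<Rightarrow> real" where
  "T c s i = G s i + c * \<rho> (G s i)"

lemma rho_nn: "0 \<le> \<rho> (G s i)" using Kinf_nonneg[OF rho G_nonneg] .

lemma T_nonneg: "0 \<le> c \<Longrightarrow> 0 \<le> T c s i"
  unfolding T_def using G_nonneg[of s i] rho_nn[of s i] by simp

lemma T_ge_G: "0 \<le> c \<Longrightarrow> G s i \<le> T c s i"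
  unfolding T_def using rho_nn[of s i] by simp

lemma T_mono: "0 \<le> c \<Longrightarrow> nonneg s \<Longrightarrow> (\<And>k. s k \<le> t k) \<Longrightarrow> T c s i \<le> T c t i"
proof -
  assume c: "0 \<le> c" and s: "nonneg s" and st: "\<And>k. s k \<le> t k"
  have g: "G s i \<le> G t i" by (rule G_mono[OF s st])
  have "\<rho> (G s i) \<le> \<rho> (G t i)" by (rule Kinf_mono[OF rho G_nonneg g])
  then show ?thesis unfolding T_def using g c by (simp add: add_mono mult_left_mono)
qed

lemma T_cmono: "0 \<le> c \<Longrightarrow> c \<le> c' \<Longrightarrow> T c s i \<le> T c' s i"
  unfolding T_def using rho_nn[of s i] by (simp add: mult_right_mono)

lemma T_cstrict: "0 \<le> c \<Longrightarrow> c < c' \<Longrightarrow> 0 < G s i \<Longrightarrow> T c s i < T c' s i"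
  unfolding T_def using Kinf_pos[OF rho, of "G s i"] by (simp add: mult_strict_right_mono)

lemma T_cont:
  assumes c: "0 \<le> c" and s0: "nonneg s0" and e: "e > 0"
  shows "\<exists>d>0. \<forall>s. nonneg s \<and> (\<forall>k. \<bar>s k - s0 k\<bar> < d) \<longrightarrow> (\<forall>i. \<bar>T c s i - T c s0 i\<bar> < e)"
proof -
  have "\<exists>e1>0. \<forall>i y. 0 \<le> y \<and> \<bar>y - G s0 i\<bar> < e1 \<longrightarrow> \<bar>(y + c * \<rho> y) - T c s0 i\<bar> < e"
  proof -
    have "\<exists>e1>0. \<forall>y. 0 \<le> y \<and> \<bar>y - G s0 i\<bar> < e1 \<longrightarrow> \<bar>(y + c * \<rho> y) - T c s0 i\<bar> < e" for i
    proof -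
      obtain d1 where d1: "d1 > 0" "\<And>y. y \<ge> 0 \<Longrightarrow> \<bar>y - G s0 i\<bar> < d1 \<Longrightarrow> \<bar>\<rho> y - \<rho> (G s0 i)\<bar> < e / (2 * (c + 1))"
        using Kinf_cont[OF rho G_nonneg, of "e / (2 * (c + 1))" s0 i] c e by auto
      show ?thesis
      proof (intro exI[of _ "min d1 (e/2)"] conjI allI impI)
        fix y assume y: "0 \<le> y \<and> \<bar>y - G s0 i\<bar> < min d1 (e / 2)"
        have r: "\<bar>\<rho> y - \<rho> (G s0 i)\<bar> < e / (2 * (c + 1))" using d1(2) y by auto
        have "\<bar>c * (\<rho> y - \<rho> (G s0 i))\<bar> \<le> (c + 1) * \<bar>\<rho> y - \<rho> (G s0 i)\<bar>"
          using c by (simp add: abs_mult mult_right_mono)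
        also have "\<dots> \<le> (c + 1) * (e / (2 * (c + 1)))" using r c by (intro mult_left_mono) auto
        also have "\<dots> = e / 2" using c by (simp add: field_simps)
        finally have "\<bar>c * (\<rho> y - \<rho> (G s0 i))\<bar> \<le> e / 2" .
        then show "\<bar>(y + c * \<rho> y) - T c s0 i\<bar> < e" using y unfolding T_def
          by (simp add: algebra_simps abs_diff_less_iff) (smt (verit, best) abs_le_iff)
      qed (use d1 e in auto)
    qed
    then obtain ef where ef: "\<forall>i. ef i > 0 \<and> (\<forall>y. 0 \<le> y \<and> \<bar>y - G s0 i\<bar> < ef i \<longrightarrow> \<bar>(y + c * \<rho> y) - T c s0 i\<bar> < e)"
      using choice[of "\<lambda>i e1. e1 > 0 \<and> (\<forall>y. 0 \<le> y \<and> \<bar>y - G s0 i\<bar> < e1 \<longrightarrow> \<bar>(y + c * \<rho> y) - T c s0 i\<bar> < e)"] by blast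
    define e1 where "e1 = Min (range ef)"
    have e1: "e1 > 0" unfolding e1_def using ef by (subst Min_gr_iff) auto
    have "e1 \<le> ef i" for i unfolding e1_def by (rule Min_le) auto
    then show ?thesis using e1 ef by (meson order_less_le_trans)
  qed
  then obtain e1 where e1: "e1 > 0" "\<And>i y. 0 \<le> y \<Longrightarrow> \<bar>y - G s0 i\<bar> < e1 \<Longrightarrow> \<bar>(y + c * \<rho> y) - T c s0 i\<bar> < e"
    by blast
  obtain d where d: "d > 0" "\<And>s. nonneg s \<Longrightarrow> (\<forall>k. \<bar>s k - s0 k\<bar> < d) \<Longrightarrow> (\<forall>i. \<bar>G s i - G s0 i\<bar> < e1)"
    using G_cont[OF s0 e1(1)] by blast
  show ?thesis
  proof (intro exI[of _ d] conjI allI impI)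
    fix s i assume s: "nonneg s \<and> (\<forall>k. \<bar>s k - s0 k\<bar> < d)"
    then have "\<bar>G s i - G s0 i\<bar> < e1" using d(2) by blast
    then show "\<bar>T c s i - T c s0 i\<bar> < e" using e1(2)[OF G_nonneg] unfolding T_def by blast
  qed (rule d(1))
qed

lemma T_rho: "Gam_rho (\<lambda>x. c * \<rho> x) Iset gam mu = T c"
  unfolding Gam_rho_def T_def by (intro ext) simp

lemma T1: "Gam_rho \<rho> Iset gam mu = T 1"
  unfolding Gam_rho_def T_def by (intro ext) simp

lemma nji_T: "0 \<le> c \<Longrightarrow> c \<le> 1 \<Longrightarrow> nonneg s \<Longrightarrow> (\<forall>i. s i \<le> T c s i) \<Longrightarrow> s = (\<lambda>_. 0)"
proof (rule ccontr)
  assume c: "0 \<le> c" "c \<le> 1" and s: "nonneg s" "\<forall>i. s i \<le> T c s i" and ne: "s \<noteq> (\<lambda>_. 0)"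
  have "\<forall>i. s i \<le> Gam_rho \<rho> Iset gam mu s i"
    unfolding T1 using s(2) T_cmono[OF c] by (meson order_trans)
  then show False using nji s(1) ne unfolding NJI_def by blast
qed

lemma decay_exists: "R > 0 \<Longrightarrow> \<exists>s. nonneg s \<and> sum s UNIV = R \<and> (\<forall>i. T 1 s i \<le> s i)"
proof (rule brouwer_decay)
  show "\<And>s. nonneg s \<Longrightarrow> \<forall>i. s i \<le> T 1 s i \<Longrightarrow> s = (\<lambda>_. 0)"
    using nji_T[of 1] by simp
qed (auto intro: T_cont T_nonneg)

section \<open>Strong connectivity propagation\<close>

abbreviation "Dg s \<equiv> nonneg s \<and> (\<forall>k. G s k \<le> s k)"

lemma prop_step:
  assumes s: "Dg s" and a: "a \<in> Iset i"
  shows "xi (gam i a (s a)) \<le> s i"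
  using G_lower[OF conjunct1[OF s] a] s by (meson order_trans)

lemma prop_big:
  assumes "(j, i) \<in> {(a, b). a \<in> Iset b}\<^sup>*"
  shows "\<forall>M. \<exists>N. \<forall>s. Dg s \<and> N \<le> s j \<longrightarrow> M \<le> s i"
  using assms
proof (induction rule: rtrancl_induct)
  case base
  then show ?case by blast
next
  case (step a i)
  then have a: "a \<in> Iset i" by simp
  show ?case
  proof
    fix M
    obtain y where y: "y \<ge> 0" "M \<le> xi y" using Kinf_D(4)[OF xi(1)] by blast
    obtain M' where M': "M' \<ge> 0" "y \<le> gam i a M'" using Kinf_D(4)[OF gam_Kinf[OF a]] by blast
    obtain N where N: "\<forall>s. Dg s \<and> N \<le> s j \<longrightarrow> M' \<le> s a" using step.IH by blast
    show "\<exists>N. \<forall>s. Dg s \<and> N \<le> s j \<longrightarrow> M \<le> s i"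
    proof (intro exI[of _ N] allI impI)
      fix s assume s: "Dg s \<and> N \<le> s j"
      then have "M' \<le> s a" using N by blast
      then have "gam i a M' \<le> gam i a (s a)" using Kinf_mono[OF gam_Kinf[OF a] M'(1)] by blast
      then have "y \<le> gam i a (s a)" using M'(2) by linarith
      then have "xi y \<le> xi (gam i a (s a))" using Kinf_mono[OF xi(1) y(1)] by blast
      then show "M \<le> s i" using y(2) prop_step[OF conjunct1[OF s] a] by linarith
    qed
  qed
qed

lemma prop_pos:
  assumes "(j, i) \<in> {(a, b). a \<in> Iset b}\<^sup>*"
  shows "\<forall>N>0. \<exists>M>0. \<forall>s. Dg s \<and> N \<le> s j \<longrightarrow> M \<le> s i"
  using assms
proof (induction rule: rtrancl_induct)
  case base
  then show ?case by blast
next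
  case (step a i)
  then have a: "a \<in> Iset i" by simp
  show ?case
  proof (intro allI impI)
    fix N :: real assume N: "N > 0"
    obtain M' where M': "M' > 0" "\<forall>s. Dg s \<and> N \<le> s j \<longrightarrow> M' \<le> s a" using step.IH N by blast
    have pos: "0 < xi (gam i a M')" using Kinf_pos[OF xi(1) Kinf_pos[OF gam_Kinf[OF a] M'(1)]] .
    show "\<exists>M>0. \<forall>s. Dg s \<and> N \<le> s j \<longrightarrow> M \<le> s i"
    proof (intro exI[of _ "xi (gam i a M')"] conjI allI impI pos)
      fix s assume s: "Dg s \<and> N \<le> s j"
      then have "M' \<le> s a" using M' by blast
      then have "gam i a M' \<le> gam i a (s a)" using Kinf_mono[OF gam_Kinf[OF a]] M'(1) by simp
      then have "xi (gam i a M') \<le> xi (gam i a (s a))"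
        using Kinf_mono[OF xi(1) Kinf_nonneg[OF gam_Kinf[OF a]]] M'(1) by simp
      then show "xi (gam i a M') \<le> s i" using prop_step[OF conjunct1[OF s] a] by linarith
    qed
  qed
qed

lemma sc': "(j, i) \<in> {(a, b). a \<in> Iset b}\<^sup>*"
  using sc unfolding strongly_connected_def by blast

lemma lower_big: "\<exists>r0. \<forall>s. Dg s \<and> r0 \<le> sum s UNIV \<longrightarrow> M \<le> s i"
proof -
  obtain N where N: "\<forall>j. \<forall>s. Dg s \<and> N j \<le> s j \<longrightarrow> M \<le> s i"
    using choice[of "\<lambda>j N. \<forall>s. Dg s \<and> N \<le> s j \<longrightarrow> M \<le> s i"] prop_big[OF sc'] by blast
  define r0 where "r0 = real CARD('i) * Max (range N)"
  show ?thesis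
  proof (intro exI[of _ r0] allI impI)
    fix s assume s: "Dg s \<and> r0 \<le> sum s UNIV"
    obtain j where j: "sum s UNIV \<le> real CARD('i) * s j" using exists_big_comp by blast
    have "N j \<le> Max (range N)" by (rule Max_ge) auto
    then have "real CARD('i) * N j \<le> r0" unfolding r0_def by (simp add: mult_left_mono)
    then have "real CARD('i) * N j \<le> real CARD('i) * s j" using s j by linarith
    then have "N j \<le> s j" by (simp add: mult_le_cancel_left_pos)
    then show "M \<le> s i" using N s by blast
  qed
qed

lemma lower_pos: "r > 0 \<Longrightarrow> \<exists>e>0. \<forall>s. Dg s \<and> r \<le> sum s UNIV \<longrightarrow> e \<le> s i"
proof -
  assume r: "r > 0"
  have rn: "r / real CARD('i) > 0" using r by simp
  obtain M where M: "\<forall>j. M j > 0 \<and> (\<forall>s. Dg s \<and> r / real CARD('i) \<le> s j \<longrightarrow> M j \<le> s i)"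
    using choice[of "\<lambda>j M. M > 0 \<and> (\<forall>s. Dg s \<and> r / real CARD('i) \<le> s j \<longrightarrow> M \<le> s i)"]
      prop_pos[OF sc'] rn by blast
  define e where "e = Min (range M)"
  have e: "e > 0" unfolding e_def using M by (subst Min_gr_iff) auto
  show ?thesis
  proof (intro exI[of _ e] conjI allI impI e)
    fix s assume s: "Dg s \<and> r \<le> sum s UNIV"
    obtain j where j: "sum s UNIV \<le> real CARD('i) * s j" using exists_big_comp by blast
    have "r \<le> real CARD('i) * s j" using s j by linarith
    then have "r / real CARD('i) \<le> s j" by (simp add: field_simps)
    then have "M j \<le> s i" using M s by blast
    moreover have "e \<le> M j" unfolding e_def by (rule Min_le) auto
    ultimately show "e \<le> s i" by linarith
  qed
qed

end

definition poly :: "(nat \<Rightarrow> real) \<Rightarrow> (nat \<Rightarrow> 'i \<Rightarrow> real) \<Rightarrow> real \<Rightarrow> 'i \<Rightarrow> real" where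
  "poly t z r = (if r \<le> 0 then (\<lambda>_. 0) else (let j = (LEAST j. t (Suc j) < r) in
     (\<lambda>i. z (Suc j) i + (r - t (Suc j)) / (t j - t (Suc j)) * (z j i - z (Suc j) i))))"

definition Incr :: "(real \<Rightarrow> real) \<Rightarrow> real \<Rightarrow> real \<Rightarrow> real \<Rightarrow> real \<Rightarrow> bool" where
  "Incr f a b c C \<longleftrightarrow> (\<forall>x y. a \<le> x \<longrightarrow> x \<le> y \<longrightarrow> y \<le> b \<longrightarrow> c * (y - x) \<le> f y - f x \<and> f y - f x \<le> C * (y - x))"

lemma Incr_join:
  assumes "Incr f a m c C" "Incr f m b c C" "a \<le> m" "m \<le> b"
  shows "Incr f a b c C"
  unfolding Incr_def
proof (intro allI impI)
  fix x y assume xy: "a \<le> x" "x \<le> y" "y \<le> b"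
  show "c * (y - x) \<le> f y - f x \<and> f y - f x \<le> C * (y - x)"
  proof (cases "y \<le> m")
    case True then show ?thesis using assms(1) xy unfolding Incr_def by blast
  next
    case False
    show ?thesis
    proof (cases "x \<ge> m")
      case True then show ?thesis using assms(2) xy unfolding Incr_def by blast
    next
      case False2: False
      have 1: "c * (m - x) \<le> f m - f x \<and> f m - f x \<le> C * (m - x)" using assms(1) xy False2 unfolding Incr_def by auto
      have 2: "c * (y - m) \<le> f y - f m \<and> f y - f m \<le> C * (y - m)" using assms(2) xy False unfolding Incr_def by auto
      have "c * (y - x) = c * (m - x) + c * (y - m)" by (simp add: algebra_simps)
      moreover have "C * (y - x) = C * (m - x) + C * (y - m)" by (simp add: algebra_simps)
      ultimately show ?thesis using 1 2 by linarith
    qed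
  qed
qed

lemma Incr_weaken:
  assumes "Incr f a b c C" "a \<le> a'" "b' \<le> b" "c' \<le> c" "C \<le> C'"
  shows "Incr f a' b' c' C'"
  unfolding Incr_def
proof (intro allI impI)
  fix x y assume xy: "a' \<le> x" "x \<le> y" "y \<le> b'"
  then have "c * (y - x) \<le> f y - f x \<and> f y - f x \<le> C * (y - x)" using assms unfolding Incr_def by auto
  moreover have "c' * (y - x) \<le> c * (y - x)" "C * (y - x) \<le> C' * (y - x)"
    using xy assms by (auto intro: mult_right_mono)
  ultimately show "c' * (y - x) \<le> f y - f x \<and> f y - f x \<le> C' * (y - x)" by linarith
qed

locale PL =
  fixes t :: "nat \<Rightarrow> real" and z :: "nat \<Rightarrow> 'i::finite \<Rightarrow> real"
  assumes t_dec: "\<And>j. t (Suc j) < t j" and t_pos: "\<And>j. 0 < t j" and t_lim: "t \<longlonglongrightarrow> 0"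
    and z_dec: "\<And>j i. z (Suc j) i \<le> z j i" and z_nn: "\<And>j i. 0 \<le> z j i"
begin

lemma t_anti: "m \<le> n \<Longrightarrow> t n \<le> t m"
proof -
  assume mn: "m \<le> n"
  have "\<And>k. t (Suc k) \<le> t k" using t_dec less_imp_le by blast
  then show ?thesis using lift_Suc_antimono_le[of t, OF _ mn] by blast
qed

lemma z_anti: "m \<le> n \<Longrightarrow> z n i \<le> z m i"
  using lift_Suc_antimono_le[of "\<lambda>j. z j i" m n] z_dec by blast

lemma t_small: "r > 0 \<Longrightarrow> \<exists>j. t j < r"
proof -
  assume r: "r > 0"
  have "eventually (\<lambda>j. dist (t j) 0 < r) sequentially" using t_lim r by (simp add: tendsto_iff)
  then obtain N where "\<forall>n\<ge>N. dist (t n) 0 < r" unfolding eventually_sequentially by blast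
  then have "dist (t N) 0 < r" by simp
  then have "t N < r" by (simp add: dist_real_def)
  then show ?thesis by blast
qed

lemma poly_eq:
  assumes "t (Suc j) < r" "r \<le> t j"
  shows "poly t z r = (\<lambda>i. z (Suc j) i + (r - t (Suc j)) / (t j - t (Suc j)) * (z j i - z (Suc j) i))"
proof -
  have r: "r > 0" using assms t_pos[of "Suc j"] by linarith
  have "(LEAST j. t (Suc j) < r) = j"
  proof (rule Least_equality)
    show "t (Suc j) < r" by fact
    fix y assume y: "t (Suc y) < r"
    show "j \<le> y"
    proof (rule ccontr)
      assume "\<not> j \<le> y"
      then have "Suc y \<le> j" by simp
      then have "t j \<le> t (Suc y)" by (rule t_anti)
      then show False using y assms(2) by linarith
    qed
  qed
  then show ?thesis unfolding poly_def using r by (simp add: Let_def)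
qed

lemma poly_piece: "0 < r \<Longrightarrow> r \<le> t 0 \<Longrightarrow> \<exists>j. t (Suc j) < r \<and> r \<le> t j"
proof -
  assume r: "0 < r" "r \<le> t 0"
  obtain j0 where "t j0 < r" using t_small[OF r(1)] by blast
  then have "t (Suc j0) < r" using t_dec[of j0] by linarith
  then have ex: "\<exists>j. t (Suc j) < r" by blast
  define j where "j = (LEAST j. t (Suc j) < r)"
  have j: "t (Suc j) < r" unfolding j_def by (rule LeastI_ex[OF ex])
  have "r \<le> t j"
  proof (cases j)
    case 0 then show ?thesis using r by simp
  next
    case (Suc j')
    have "\<not> t (Suc j') < r"
    proof
      assume "t (Suc j') < r"
      then have "j \<le> j'" unfolding j_def by (rule Least_le)
      then show False using Suc by simp
    qed
    then show ?thesis using Suc by simp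
  qed
  then show ?thesis using j by blast
qed

lemma poly_eq_closed:
  assumes "t (Suc j) \<le> r" "r \<le> t j"
  shows "poly t z r i = z (Suc j) i + (r - t (Suc j)) / (t j - t (Suc j)) * (z j i - z (Suc j) i)"
proof (cases "r = t (Suc j)")
  case True
  have "poly t z r = (\<lambda>i. z (Suc (Suc j)) i + (r - t (Suc (Suc j))) / (t (Suc j) - t (Suc (Suc j))) * (z (Suc j) i - z (Suc (Suc j)) i))"
    using True t_dec[of "Suc j"] by (intro poly_eq) auto
  moreover have "(r - t (Suc (Suc j))) / (t (Suc j) - t (Suc (Suc j))) = 1"
    using True t_dec[of "Suc j"] by simp
  ultimately show ?thesis using True by simp
next
  case False
  then show ?thesis using poly_eq[of j r] assms by simp
qed

lemma poly_t: "poly t z (t j) i = z j i"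
  using poly_eq_closed[of j "t j" i] t_dec[of j] by simp

lemma poly_between:
  assumes "t (Suc j) \<le> r" "r \<le> t j"
  shows "z (Suc j) i \<le> poly t z r i \<and> poly t z r i \<le> z j i"
proof -
  define l where "l = (r - t (Suc j)) / (t j - t (Suc j))"
  have l: "0 \<le> l" "l \<le> 1" unfolding l_def using assms t_dec[of j] by (auto simp: field_simps)
  have d: "0 \<le> z j i - z (Suc j) i" using z_dec by simp
  have e: "poly t z r i = z (Suc j) i + l * (z j i - z (Suc j) i)" unfolding l_def by (rule poly_eq_closed[OF assms])
  have "l * (z j i - z (Suc j) i) \<le> 1 * (z j i - z (Suc j) i)" using l d by (intro mult_right_mono) auto
  then show ?thesis using e l d by simp
qed

lemma poly_nn: "r \<le> t 0 \<Longrightarrow> 0 \<le> poly t z r i"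
proof (cases "r \<le> 0")
  case True then show ?thesis unfolding poly_def by simp
next
  case False
  assume r: "r \<le> t 0"
  obtain j where "t (Suc j) < r" "r \<le> t j" using poly_piece[of r] False r by auto
  then show ?thesis using poly_between[of j r i] z_nn[of "Suc j" i] by auto
qed

lemma poly_mono:
  assumes "0 \<le> r" "r \<le> r'" "r' \<le> t 0"
  shows "poly t z r i \<le> poly t z r' i"
proof (cases "r \<le> 0")
  case True
  then have "poly t z r i = 0" unfolding poly_def by simp
  then show ?thesis using poly_nn[of r' i] assms by simp
next
  case False
  then have r: "0 < r" by simp
  obtain j where j: "t (Suc j) < r" "r \<le> t j" using poly_piece[of r] r assms by auto
  obtain j' where j': "t (Suc j') < r'" "r' \<le> t j'" using poly_piece[of r'] r assms by auto
  show ?thesis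
  proof (cases "j = j'")
    case True
    have "(r - t (Suc j)) / (t j - t (Suc j)) \<le> (r' - t (Suc j)) / (t j - t (Suc j))"
      using assms t_dec[of j] by (intro divide_right_mono) auto
    then have "(r - t (Suc j)) / (t j - t (Suc j)) * (z j i - z (Suc j) i) \<le> (r' - t (Suc j)) / (t j - t (Suc j)) * (z j i - z (Suc j) i)"
      using z_dec[of j i] by (intro mult_right_mono) auto
    then show ?thesis using poly_eq[OF j] poly_eq[OF j'] True by simp
  next
    case False
    have "j' < j"
    proof (rule ccontr)
      assume "\<not> j' < j"
      then have "Suc j \<le> j'" using False by simp
      then have "t j' \<le> t (Suc j)" by (rule t_anti)
      then show False using j j' assms by linarith
    qed
    then have "Suc j' \<le> j" by simp
    then have "z j i \<le> z (Suc j') i" by (rule z_anti)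
    moreover have "poly t z r i \<le> z j i" using poly_between[of j r i] j by auto
    moreover have "z (Suc j') i \<le> poly t z r' i" using poly_between[of j' r' i] j' by auto
    ultimately show ?thesis by linarith
  qed
qed

lemma poly_le_z: "0 \<le> r \<Longrightarrow> r \<le> t j \<Longrightarrow> poly t z r i \<le> z j i"
  using poly_mono[of r "t j" i] poly_t[of j i] t_anti[of 0 j] by auto

lemma poly_sum:
  assumes ts: "\<And>j. t j = sum (z j) UNIV" and r: "0 \<le> r" "r \<le> t 0"
  shows "sum (poly t z r) UNIV = r"
proof (cases "r \<le> 0")
  case True then show ?thesis using r unfolding poly_def by simp
next
  case False
  obtain j where j: "t (Suc j) < r" "r \<le> t j" using poly_piece[of r] False r by auto
  define l where "l = (r - t (Suc j)) / (t j - t (Suc j))"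
  have "sum (poly t z r) UNIV = sum (\<lambda>i. z (Suc j) i + l * (z j i - z (Suc j) i)) UNIV"
    unfolding poly_eq[OF j] l_def by simp
  also have "\<dots> = t (Suc j) + l * (t j - t (Suc j))"
    unfolding ts by (simp add: sum.distrib sum_distrib_left[symmetric] sum_subtractf)
  also have "\<dots> = r" unfolding l_def using t_dec[of j] by (simp add: field_simps)
  finally show ?thesis .
qed

definition slope :: "nat \<Rightarrow> 'i \<Rightarrow> real" where
  "slope j i = (z j i - z (Suc j) i) / (t j - t (Suc j))"

lemma poly_Incr_piece:
  assumes "c \<le> slope j i" "slope j i \<le> C"
  shows "Incr (\<lambda>r. poly t z r i) (t (Suc j)) (t j) c C"
  unfolding Incr_def
proof (intro allI impI)
  fix x y assume xy: "t (Suc j) \<le> x" "x \<le> y" "y \<le> t j"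
  have "poly t z y i - poly t z x i = slope j i * (y - x)"
    using poly_eq_closed[of j x i] poly_eq_closed[of j y i] xy t_dec[of j]
    unfolding slope_def by (simp add: field_simps)
  moreover have "c * (y - x) \<le> slope j i * (y - x)" "slope j i * (y - x) \<le> C * (y - x)"
    using assms xy by (auto intro: mult_right_mono)
  ultimately show "c * (y - x) \<le> poly t z y i - poly t z x i \<and> poly t z y i - poly t z x i \<le> C * (y - x)"
    by simp
qed

lemma poly_Incr:
  assumes "\<And>j. j \<le> J \<Longrightarrow> c \<le> slope j i \<and> slope j i \<le> C"
  shows "Incr (\<lambda>r. poly t z r i) (t (Suc J)) (t 0) c C"
  using assms
proof (induction J)
  case 0
  then show ?case using poly_Incr_piece[of c 0 i C] by auto
next
  case (Suc J)
  have 1: "Incr (\<lambda>r. poly t z r i) (t (Suc J)) (t 0) c C" using Suc by auto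
  have 2: "Incr (\<lambda>r. poly t z r i) (t (Suc (Suc J))) (t (Suc J)) c C"
    using Suc.prems[of "Suc J"] poly_Incr_piece by auto
  show ?case by (rule Incr_join[OF 2 1]) (use t_dec t_anti in \<open>auto intro: less_imp_le\<close>)
qed

end

context GSN
begin

lemma T_tendsto:
  assumes zL: "\<And>j. (\<lambda>n. z n j) \<longlonglongrightarrow> L j" and L: "nonneg L" and z: "\<And>n. nonneg (z n)" and c: "0 \<le> c"
  shows "(\<lambda>n. T c (z n) i) \<longlonglongrightarrow> T c L i"
  unfolding tendsto_iff
proof (intro allI impI)
  fix e :: real assume e: "e > 0"
  obtain d where d: "d > 0" "\<And>s. nonneg s \<Longrightarrow> (\<forall>k. \<bar>s k - L k\<bar> < d) \<Longrightarrow> (\<forall>i. \<bar>T c s i - T c L i\<bar> < e)"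
    using T_cont[OF c L e] by blast
  have "eventually (\<lambda>n. dist (z n j) (L j) < d) sequentially" for j
    using zL[of j] d(1) by (simp add: tendsto_iff)
  then have "eventually (\<lambda>n. \<forall>j. dist (z n j) (L j) < d) sequentially"
    by (rule eventually_all_finite)
  then show "eventually (\<lambda>n. dist (T c (z n) i) (T c L i) < e) sequentially"
  proof (rule eventually_mono)
    fix n assume "\<forall>j. dist (z n j) (L j) < d"
    then have "\<forall>k. \<bar>z n k - L k\<bar> < d" by (simp add: dist_real_def)
    then show "dist (T c (z n) i) (T c L i) < e" using d(2)[OF z] by (simp add: dist_real_def)
  qed
qed

lemma descent_to_zero:
  assumes z: "\<And>k. nonneg (z k)" and zdec: "\<And>k i. z (Suc k) i \<le> z k i"
    and step: "\<And>k i. z (Suc k) i \<le> max (T c (z k) i) (z k i / 2)"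
    and c: "0 \<le> c" "c \<le> 1"
  shows "(\<lambda>k. z k i) \<longlonglongrightarrow> 0"
proof -
  have "\<exists>L. (\<lambda>k. z k j) \<longlonglongrightarrow> L" for j
  proof -
    have "decseq (\<lambda>k. z k j)" using zdec by (intro decseq_SucI) auto
    moreover have "\<forall>k. 0 \<le> z k j" using z unfolding nonneg_def by auto
    ultimately show ?thesis using decseq_convergent[of "\<lambda>k. z k j" 0] by blast
  qed
  then obtain L where L0: "\<forall>j. (\<lambda>k. z k j) \<longlonglongrightarrow> L j"
    using choice[of "\<lambda>j L. (\<lambda>k. z k j) \<longlonglongrightarrow> L"] by blast
  then have L: "\<And>j. (\<lambda>k. z k j) \<longlonglongrightarrow> L j" by blast
  have Lz: "L j \<le> z k j" for j k
  proof -
    have "decseq (\<lambda>k. z k j)" using zdec by (intro decseq_SucI) auto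
    then show ?thesis using L[of j] by (rule decseq_ge)
  qed
  have Lnn: "nonneg L" unfolding nonneg_def
  proof
    fix j show "0 \<le> L j" using L[of j] z unfolding nonneg_def by (intro LIMSEQ_le_const) auto
  qed
  have "L j \<le> T c L j" for j
  proof -
    have lim: "(\<lambda>k. max (T c (z k) j) (z k j / 2)) \<longlonglongrightarrow> max (T c L j) (L j / 2)"
      by (intro tendsto_max T_tendsto[OF L Lnn z c(1)] tendsto_divide L tendsto_const) auto
    have "L j \<le> max (T c L j) (L j / 2)"
    proof (rule LIMSEQ_le_const[OF lim])
      show "\<exists>N. \<forall>n\<ge>N. L j \<le> max (T c (z n) j) (z n j / 2)"
      proof (intro exI[of _ 0] allI impI)
        fix n :: nat
        have "L j \<le> z (Suc n) j" by (rule Lz)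
        also have "\<dots> \<le> max (T c (z n) j) (z n j / 2)" by (rule step)
        finally show "L j \<le> max (T c (z n) j) (z n j / 2)" .
      qed
    qed
    moreover have "0 \<le> L j" using Lnn unfolding nonneg_def by auto
    ultimately show ?thesis using T_nonneg[OF c(1), of L j] by (cases "L j = 0") (auto simp: max_def split: if_splits)
  qed
  then have "L = (\<lambda>_. 0)" using nji_T[OF c Lnn] by blast
  then show ?thesis using L[of i] by simp
qed

lemma seg_decay:
  assumes c: "0 \<le> c" and a: "nonneg a" and y: "\<And>i. a i \<le> y i" "\<And>i. y i \<le> b i"
    and b: "\<And>i. T c b i \<le> a i"
  shows "T c y i \<le> y i"
proof -
  have yn: "nonneg y" using a y(1) unfolding nonneg_def by (meson order_trans)
  have "T c y i \<le> T c b i" by (rule T_mono[OF c yn y(2)])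
  also have "\<dots> \<le> a i" by (rule b)
  also have "\<dots> \<le> y i" by (rule y(1))
  finally show ?thesis .
qed

lemma T_zero: "T c (\<lambda>_. 0) i = 0"
  unfolding T_def G_zero using Kinf_D(2)[OF rho] by simp

end

context GSN
begin

definition dstep :: "('i \<Rightarrow> real) \<Rightarrow> 'i \<Rightarrow> real" where
  "dstep s = (\<lambda>i. max (T 1 s i) (s i / 2))"

definition dz :: "('i \<Rightarrow> real) \<Rightarrow> nat \<Rightarrow> 'i \<Rightarrow> real" where
  "dz b k = (dstep ^^ k) b"

lemma dz_0: "dz b 0 = b" unfolding dz_def by simp
lemma dz_Suc: "dz b (Suc k) = dstep (dz b k)" unfolding dz_def by simp

lemma nonneg_ne: "nonneg s \<Longrightarrow> s \<noteq> (\<lambda>_. 0) \<Longrightarrow> \<exists>i. 0 < s i"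
proof -
  assume s: "nonneg s" "s \<noteq> (\<lambda>_. 0)"
  then obtain i where "s i \<noteq> 0" by auto
  moreover have "0 \<le> s i" using s unfolding nonneg_def by auto
  ultimately show ?thesis by (intro exI[of _ i]) linarith
qed

lemma dz_inv:
  assumes b: "nonneg b" "\<And>i. T 1 b i \<le> b i" "b \<noteq> (\<lambda>_. 0)"
  shows "nonneg (dz b k) \<and> (\<forall>i. T 1 (dz b k) i \<le> dz b k i) \<and> dz b k \<noteq> (\<lambda>_. 0)"
proof (induction k)
  case 0 then show ?case using b unfolding dz_0 by auto
next
  case (Suc k)
  define s where "s = dz b k"
  have s: "nonneg s" "\<And>i. T 1 s i \<le> s i" "s \<noteq> (\<lambda>_. 0)" using Suc unfolding s_def by auto
  have e: "dz b (Suc k) = dstep s" unfolding s_def dz_Suc ..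
  have le: "dstep s i \<le> s i" for i
  proof -
    have "0 \<le> s i" using s(1) unfolding nonneg_def by auto
    then show ?thesis unfolding dstep_def using s(2)[of i] by auto
  qed
  have nn: "nonneg (dstep s)" unfolding nonneg_def dstep_def using T_nonneg[of 1] by (auto intro: max.coboundedI1)
  have "T 1 (dstep s) i \<le> dstep s i" for i
  proof -
    have "T 1 (dstep s) i \<le> T 1 s i" by (rule T_mono) (use nn le in auto)
    also have "\<dots> \<le> dstep s i" unfolding dstep_def by simp
    finally show ?thesis .
  qed
  moreover have "dstep s \<noteq> (\<lambda>_. 0)"
  proof
    assume "dstep s = (\<lambda>_. 0)"
    obtain i where "0 < s i" using nonneg_ne[OF s(1,3)] by blast
    moreover have "s i / 2 \<le> dstep s i" unfolding dstep_def by simp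
    ultimately show False using \<open>dstep s = (\<lambda>_. 0)\<close> by (metis half_gt_zero not_le)
  qed
  ultimately show ?case using nn unfolding e by auto
qed

lemma dz_dec:
  assumes b: "nonneg b" "\<And>i. T 1 b i \<le> b i" "b \<noteq> (\<lambda>_. 0)"
  shows "dz b (Suc k) i \<le> dz b k i"
  using dz_inv[OF b, of k] unfolding dz_Suc dstep_def nonneg_def by auto

lemma dz_sum_dec:
  assumes b: "nonneg b" "\<And>i. T 1 b i \<le> b i" "b \<noteq> (\<lambda>_. 0)"
  shows "sum (dz b (Suc k)) UNIV < sum (dz b k) UNIV"
proof -
  define s where "s = dz b k"
  have s: "nonneg s" "\<And>i. T 1 s i \<le> s i" "s \<noteq> (\<lambda>_. 0)" using dz_inv[OF b, of k] unfolding s_def by auto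
  have "\<exists>i. dstep s i < s i"
  proof (rule ccontr)
    assume "\<not> (\<exists>i. dstep s i < s i)"
    then have ge: "s i \<le> dstep s i" for i by (simp add: not_less)
    have "s i \<le> T 1 s i" for i
    proof (cases "s i > 0")
      case True
      then have "s i / 2 < s i" by simp
      then show ?thesis using ge[of i] unfolding dstep_def by (auto simp: max_def split: if_splits)
    next
      case False
      then have "s i = 0" using s(1) unfolding nonneg_def by (meson antisym not_le)
      then show ?thesis using T_nonneg[of 1 s i] by simp
    qed
    then show False using nji_T[of 1 s] s by auto
  qed
  moreover have "dstep s i \<le> s i" for i using dz_dec[OF b, of k i] unfolding s_def dz_Suc .
  ultimately have "sum (dstep s) UNIV < sum s UNIV" by (intro sum_strict_mono_ex1) auto
  then show ?thesis unfolding s_def dz_Suc .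
qed

lemma dz_sum_pos:
  assumes b: "nonneg b" "\<And>i. T 1 b i \<le> b i" "b \<noteq> (\<lambda>_. 0)"
  shows "0 < sum (dz b k) UNIV"
proof -
  have s: "nonneg (dz b k)" "dz b k \<noteq> (\<lambda>_. 0)" using dz_inv[OF b, of k] by auto
  obtain i where i: "0 < dz b k i" using nonneg_ne[OF s] by blast
  have "dz b k i \<le> sum (dz b k) UNIV" by (rule member_le_sum) (use s(1) in \<open>auto simp: nonneg_def\<close>)
  then show ?thesis using i by linarith
qed

lemma dz_lim:
  assumes b: "nonneg b" "\<And>i. T 1 b i \<le> b i" "b \<noteq> (\<lambda>_. 0)"
  shows "(\<lambda>k. sum (dz b k) UNIV) \<longlonglongrightarrow> 0"
proof -
  have "(\<lambda>k. dz b k i) \<longlonglongrightarrow> 0" for i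
  proof (rule descent_to_zero[of "dz b" 1])
    show "\<And>k. nonneg (dz b k)" using dz_inv[OF b] by blast
    show "\<And>k i. dz b (Suc k) i \<le> dz b k i" by (rule dz_dec[OF b])
    show "\<And>k i. dz b (Suc k) i \<le> max (T 1 (dz b k) i) (dz b k i / 2)" unfolding dz_Suc dstep_def by simp
  qed auto
  then have "(\<lambda>k. \<Sum>i\<in>UNIV. dz b k i) \<longlonglongrightarrow> (\<Sum>i\<in>UNIV. (0::real))"
    using tendsto_sum[of UNIV "\<lambda>i k. dz b k i" "\<lambda>i. 0" sequentially] by simp
  then show ?thesis by simp
qed

definition PP :: "real \<Rightarrow> (real \<Rightarrow> 'i \<Rightarrow> real) set" where
  "PP R = {f. (\<forall>r. 0 \<le> r \<and> r \<le> R \<longrightarrow> nonneg (f r) \<and> (\<forall>i. T 1 (f r) i \<le> f r i) \<and> sum (f r) UNIV = r)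
            \<and> (\<forall>r r' i. 0 \<le> r \<and> r \<le> r' \<and> r' \<le> R \<longrightarrow> f r i \<le> f r' i)}"

lemma PP_ne: "R > 0 \<Longrightarrow> PP R \<noteq> {}"
proof -
  assume R: "R > 0"
  obtain b where b0: "nonneg b" "sum b UNIV = R" "\<forall>i. T 1 b i \<le> b i" using decay_exists[OF R] by blast
  have bne: "b \<noteq> (\<lambda>_. 0)" using b0(2) R by auto
  have b: "nonneg b" "\<And>i. T 1 b i \<le> b i" "b \<noteq> (\<lambda>_. 0)" using b0 bne by auto
  define t where "t k = sum (dz b k) UNIV" for k
  interpret PL t "dz b"
  proof
    show "\<And>j. t (Suc j) < t j" unfolding t_def by (rule dz_sum_dec[OF b])
    show "\<And>j. 0 < t j" unfolding t_def by (rule dz_sum_pos[OF b])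
    show "t \<longlonglongrightarrow> 0" unfolding t_def by (rule dz_lim[OF b])
    show "\<And>j i. dz b (Suc j) i \<le> dz b j i" by (rule dz_dec[OF b])
    show "\<And>j i. 0 \<le> dz b j i" using dz_inv[OF b] unfolding nonneg_def by blast
  qed
  have t0: "t 0 = R" unfolding t_def dz_0 using b0 by simp
  define f where "f = poly t (dz b)"
  have A: "\<forall>r. 0 \<le> r \<and> r \<le> R \<longrightarrow> nonneg (f r) \<and> (\<forall>i. T 1 (f r) i \<le> f r i) \<and> sum (f r) UNIV = r"
  proof (intro allI impI)
    fix r assume r: "0 \<le> r \<and> r \<le> R"
    have 1: "nonneg (f r)" unfolding f_def nonneg_def using poly_nn r t0 by auto
    have 2: "sum (f r) UNIV = r" unfolding f_def using poly_sum[of r] t_def r t0 by auto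
    have 3: "\<forall>i. T 1 (f r) i \<le> f r i"
    proof (cases "r = 0")
      case True
      then have "f r = (\<lambda>_. 0)" unfolding f_def poly_def by simp
      then show ?thesis using T_zero by simp
    next
      case False
      then obtain j where j: "t (Suc j) < r" "r \<le> t j" using poly_piece[of r] r t0 by auto
      show ?thesis
      proof
        fix i
        show "T 1 (f r) i \<le> f r i"
        proof (rule seg_decay[of 1 "dz b (Suc j)" "f r" "dz b j"])
          show "nonneg (dz b (Suc j))" using dz_inv[OF b] by blast
          show "\<And>i. dz b (Suc j) i \<le> f r i" "\<And>i. f r i \<le> dz b j i"
            unfolding f_def using poly_between[of j r] j by auto
          show "\<And>i. T 1 (dz b j) i \<le> dz b (Suc j) i" unfolding dz_Suc dstep_def by simp
        qed simp
      qed
    qed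
    show "nonneg (f r) \<and> (\<forall>i. T 1 (f r) i \<le> f r i) \<and> sum (f r) UNIV = r" using 1 2 3 by blast
  qed
  have B: "\<forall>r r' i. 0 \<le> r \<and> r \<le> r' \<and> r' \<le> R \<longrightarrow> f r i \<le> f r' i"
    unfolding f_def using poly_mono t0 by auto
  have "f \<in> PP R" unfolding PP_def using A B by blast
  then show ?thesis by blast
qed

lemma PP_anti: "R \<le> R' \<Longrightarrow> PP R' \<subseteq> PP R"
  unfolding PP_def by auto

lemma PP_D:
  assumes "f \<in> PP R" "0 \<le> r" "r \<le> R"
  shows "nonneg (f r)" "\<And>i. T 1 (f r) i \<le> f r i" "sum (f r) UNIV = r"
  using assms unfolding PP_def by auto

lemma PP_mono: "f \<in> PP R \<Longrightarrow> 0 \<le> r \<Longrightarrow> r \<le> r' \<Longrightarrow> r' \<le> R \<Longrightarrow> f r i \<le> f r' i"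
  unfolding PP_def by auto

lemma PP_le_r: assumes "f \<in> PP R" "0 \<le> r" "r \<le> R" shows "f r i \<le> r"
proof -
  have "f r i \<le> sum (f r) UNIV" by (rule member_le_sum) (use PP_D(1)[OF assms] in \<open>auto simp: nonneg_def\<close>)
  then show ?thesis using PP_D(3)[OF assms] by simp
qed

lemma PP_lip: assumes f: "f \<in> PP R" and r: "0 \<le> r" "r \<le> r'" "r' \<le> R" shows "f r' i - f r i \<le> r' - r"
proof -
  have "f r' i - f r i \<le> sum (\<lambda>j. f r' j - f r j) UNIV"
    by (rule member_le_sum[of i UNIV "\<lambda>j. f r' j - f r j", simplified]) (use PP_mono[OF f] r in auto)
  also have "\<dots> = r' - r" using PP_D(3)[OF f] r by (simp add: sum_subtractf)
  finally show ?thesis .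
qed

lemma PP_Dg: assumes "f \<in> PP R" "0 \<le> r" "r \<le> R" shows "Dg (f r)"
  using PP_D[OF assms] T_ge_G[of 1] by (meson order_trans zero_le_one)

definition m :: "nat \<Rightarrow> real \<Rightarrow> 'i \<Rightarrow> real" where
  "m N r i = Inf ((\<lambda>f. f r i) ` PP (real (Suc N)))"

lemma PPN_ne: "PP (real (Suc N)) \<noteq> {}" by (rule PP_ne) simp

lemma m_le: "f \<in> PP (real (Suc N)) \<Longrightarrow> 0 \<le> r \<Longrightarrow> r \<le> real (Suc N) \<Longrightarrow> m N r i \<le> f r i"
proof -
  assume f: "f \<in> PP (real (Suc N))" and r: "0 \<le> r" "r \<le> real (Suc N)"
  have "bdd_below ((\<lambda>f. f r i) ` PP (real (Suc N)))"
  proof (rule bdd_belowI)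
    fix x assume "x \<in> (\<lambda>f. f r i) ` PP (real (Suc N))"
    then obtain g where g: "g \<in> PP (real (Suc N))" "x = g r i" by blast
    show "0 \<le> x" using PP_D(1)[OF g(1) r] g(2) unfolding nonneg_def by auto
  qed
  then show ?thesis unfolding m_def using f by (intro cInf_lower) auto
qed

lemma m_ge: "(\<And>f. f \<in> PP (real (Suc N)) \<Longrightarrow> a \<le> f r i) \<Longrightarrow> a \<le> m N r i"
  unfolding m_def by (rule cInf_greatest) (use PPN_ne in auto)

lemma m_some: obtains f where "f \<in> PP (real (Suc N))"
  using PPN_ne by blast

lemma m_nn: "0 \<le> r \<Longrightarrow> r \<le> real (Suc N) \<Longrightarrow> 0 \<le> m N r i"
  by (rule m_ge) (use PP_D(1) in \<open>auto simp: nonneg_def\<close>)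

lemma m_le_r: "0 \<le> r \<Longrightarrow> r \<le> real (Suc N) \<Longrightarrow> m N r i \<le> r"
proof -
  assume r: "0 \<le> r" "r \<le> real (Suc N)"
  obtain f where f: "f \<in> PP (real (Suc N))" by (rule m_some)
  show ?thesis using m_le[OF f r, of i] PP_le_r[OF f r, of i] by linarith
qed

lemma m_decay:
  assumes r: "0 \<le> r" "r \<le> real (Suc N)"
  shows "T 1 (m N r) i \<le> m N r i"
proof (rule m_ge)
  fix f assume f: "f \<in> PP (real (Suc N))"
  have "T 1 (m N r) i \<le> T 1 (f r) i"
    by (rule T_mono) (use m_nn[OF r] m_le[OF f r] in \<open>auto simp: nonneg_def\<close>)
  also have "\<dots> \<le> f r i" by (rule PP_D(2)[OF f r])
  finally show "T 1 (m N r) i \<le> f r i" .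
qed

lemma m_mono_r: "0 \<le> r \<Longrightarrow> r \<le> r' \<Longrightarrow> r' \<le> real (Suc N) \<Longrightarrow> m N r i \<le> m N r' i"
proof (rule m_ge)
  fix f assume r: "0 \<le> r" "r \<le> r'" "r' \<le> real (Suc N)" and f: "f \<in> PP (real (Suc N))"
  have "m N r i \<le> f r i" by (rule m_le[OF f]) (use r in auto)
  also have "\<dots> \<le> f r' i" by (rule PP_mono[OF f]) (use r in auto)
  finally show "m N r i \<le> f r' i" .
qed

lemma m_lip: "0 \<le> r \<Longrightarrow> r \<le> r' \<Longrightarrow> r' \<le> real (Suc N) \<Longrightarrow> m N r' i \<le> m N r i + (r' - r)"
proof -
  assume r: "0 \<le> r" "r \<le> r'" "r' \<le> real (Suc N)"
  have "m N r' i - (r' - r) \<le> m N r i"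
  proof (rule m_ge)
    fix f assume f: "f \<in> PP (real (Suc N))"
    have "m N r' i \<le> f r' i" by (rule m_le[OF f]) (use r in auto)
    also have "\<dots> \<le> f r i + (r' - r)" using PP_lip[OF f r, of i] by linarith
    finally show "m N r' i - (r' - r) \<le> f r i" by linarith
  qed
  then show ?thesis by linarith
qed

lemma m_mono_N: "N \<le> N' \<Longrightarrow> 0 \<le> r \<Longrightarrow> r \<le> real (Suc N) \<Longrightarrow> m N r i \<le> m N' r i"
proof (rule m_ge)
  fix f assume N: "N \<le> N'" and r: "0 \<le> r" "r \<le> real (Suc N)" and f: "f \<in> PP (real (Suc N'))"
  have "f \<in> PP (real (Suc N))" using PP_anti[of "real (Suc N)" "real (Suc N')"] N f by auto
  then show "m N r i \<le> f r i" by (rule m_le) (use r in auto)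
qed

lemma m_lower_pos: "r > 0 \<Longrightarrow> \<exists>e>0. \<forall>N. r \<le> real (Suc N) \<longrightarrow> e \<le> m N r i"
proof -
  assume r: "r > 0"
  obtain e where e: "e > 0" "\<And>s. Dg s \<and> r \<le> sum s UNIV \<Longrightarrow> e \<le> s i" using lower_pos[OF r, of i] by blast
  show ?thesis
  proof (intro exI[of _ e] conjI allI impI e(1))
    fix N assume N: "r \<le> real (Suc N)"
    show "e \<le> m N r i"
    proof (rule m_ge)
      fix f assume f: "f \<in> PP (real (Suc N))"
      show "e \<le> f r i" using e(2)[of "f r"] PP_Dg[OF f] PP_D(3)[OF f] r N by auto
    qed
  qed
qed

lemma m_lower_big: "\<exists>r0. \<forall>r N. r0 \<le> r \<and> 0 \<le> r \<and> r \<le> real (Suc N) \<longrightarrow> M \<le> m N r i"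
proof -
  obtain r0 where r0: "\<And>s. Dg s \<and> r0 \<le> sum s UNIV \<Longrightarrow> M \<le> s i" using lower_big[of M i] by blast
  show ?thesis
  proof (intro exI[of _ r0] allI impI)
    fix r N assume rN: "r0 \<le> r \<and> 0 \<le> r \<and> r \<le> real (Suc N)"
    show "M \<le> m N r i"
    proof (rule m_ge)
      fix f assume f: "f \<in> PP (real (Suc N))"
      show "M \<le> f r i" using r0[of "f r"] PP_Dg[OF f] PP_D(3)[OF f] rN by auto
    qed
  qed
qed

definition sig :: "real \<Rightarrow> 'i \<Rightarrow> real" where
  "sig r i = (SUP N. m (N + nat \<lceil>r\<rceil>) r i)"

lemma idx_ok: "0 \<le> r \<Longrightarrow> r \<le> real (Suc (N + nat \<lceil>r\<rceil>))"
proof -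
  assume "0 \<le> r"
  have "r \<le> real (nat \<lceil>r\<rceil>)" by linarith
  then show ?thesis by simp
qed

lemma sig_bdd: "0 \<le> r \<Longrightarrow> bdd_above (range (\<lambda>N. m (N + nat \<lceil>r\<rceil>) r i))"
  unfolding bdd_above_def using m_le_r idx_ok by blast

lemma sig_ge_m: "0 \<le> r \<Longrightarrow> m (N + nat \<lceil>r\<rceil>) r i \<le> sig r i"
  unfolding sig_def by (rule cSUP_upper[OF _ sig_bdd]) auto

lemma sig_le: "(\<And>N. m (N + nat \<lceil>r\<rceil>) r i \<le> a) \<Longrightarrow> sig r i \<le> a"
  unfolding sig_def by (rule cSUP_least) auto

lemma sig_nn: "0 \<le> r \<Longrightarrow> 0 \<le> sig r i"
  using sig_ge_m[of r 0 i] m_nn[OF _ idx_ok, of r 0 i] by linarith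

lemma sig_le_r: "0 \<le> r \<Longrightarrow> sig r i \<le> r"
  by (rule sig_le) (use m_le_r idx_ok in blast)

lemma sig_0: "sig 0 i = 0"
  using sig_nn[of 0 i] sig_le_r[of 0 i] by simp

lemma sig_incseq: "0 \<le> r \<Longrightarrow> incseq (\<lambda>N. m (N + nat \<lceil>r\<rceil>) r i)"
  unfolding incseq_def using m_mono_N idx_ok by simp

lemma sig_lim: "0 \<le> r \<Longrightarrow> (\<lambda>N. m (N + nat \<lceil>r\<rceil>) r i) \<longlonglongrightarrow> sig r i"
  unfolding sig_def by (rule LIMSEQ_incseq_SUP[OF sig_bdd sig_incseq])

lemma sig_mono:
  assumes r: "0 \<le> r" "r \<le> r'"
  shows "sig r i \<le> sig r' i"
proof (rule sig_le)
  fix N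
  have r': "0 \<le> r'" using r by linarith
  have "m (N + nat \<lceil>r\<rceil>) r i \<le> m ((N + nat \<lceil>r\<rceil>) + nat \<lceil>r'\<rceil>) r i"
    by (rule m_mono_N) (use idx_ok[OF r(1)] r in auto)
  also have "\<dots> \<le> m ((N + nat \<lceil>r\<rceil>) + nat \<lceil>r'\<rceil>) r' i"
    by (rule m_mono_r) (use idx_ok[OF r', of "N + nat \<lceil>r\<rceil>"] r in auto)
  also have "\<dots> \<le> sig r' i" by (rule sig_ge_m[OF r'])
  finally show "m (N + nat \<lceil>r\<rceil>) r i \<le> sig r' i" .
qed

lemma sig_lip:
  assumes r: "0 \<le> r" "r \<le> r'"
  shows "sig r' i \<le> sig r i + (r' - r)"
proof -
  have r': "0 \<le> r'" using r by linarith
  have "sig r' i - (r' - r) \<le> sig r i"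
  proof -
    have "sig r' i \<le> sig r i + (r' - r)"
    proof (rule sig_le)
      fix N
      define K where "K = N + nat \<lceil>r'\<rceil> - nat \<lceil>r\<rceil>"
      have "\<lceil>r\<rceil> \<le> \<lceil>r'\<rceil>" using r(2) by (rule ceiling_mono)
      then have ceil: "nat \<lceil>r\<rceil> \<le> nat \<lceil>r'\<rceil>" by (rule nat_mono)
      have KK: "K + nat \<lceil>r\<rceil> = N + nat \<lceil>r'\<rceil>" unfolding K_def using ceil by simp
      have "m (N + nat \<lceil>r'\<rceil>) r' i \<le> m (N + nat \<lceil>r'\<rceil>) r i + (r' - r)"
        by (rule m_lip) (use idx_ok[OF r', of N] r in auto)
      also have "m (N + nat \<lceil>r'\<rceil>) r i = m (K + nat \<lceil>r\<rceil>) r i" using KK by simp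
      also have "\<dots> \<le> sig r i" by (rule sig_ge_m[OF r(1)])
      finally show "m (N + nat \<lceil>r'\<rceil>) r' i \<le> sig r i + (r' - r)" by linarith
    qed
    then show ?thesis by linarith
  qed
  then show ?thesis by linarith
qed

lemma sig_nonneg: "0 \<le> r \<Longrightarrow> nonneg (sig r)"
  unfolding nonneg_def using sig_nn by auto

lemma sig_decay:
  assumes r: "0 \<le> r"
  shows "T 1 (sig r) i \<le> sig r i"
proof -
  have lim: "(\<lambda>N. T 1 (m (N + nat \<lceil>r\<rceil>) r) i) \<longlonglongrightarrow> T 1 (sig r) i"
  proof (rule T_tendsto)
    show "\<And>j. (\<lambda>n. m (n + nat \<lceil>r\<rceil>) r j) \<longlonglongrightarrow> sig r j" by (rule sig_lim[OF r])
    show "nonneg (sig r)" by (rule sig_nonneg[OF r])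
    show "\<And>n. nonneg (m (n + nat \<lceil>r\<rceil>) r)" unfolding nonneg_def using m_nn[OF r idx_ok[OF r]] by blast
  qed simp
  show ?thesis
  proof (rule LIMSEQ_le[OF lim sig_lim[OF r]])
    show "\<exists>N. \<forall>n\<ge>N. T 1 (m (n + nat \<lceil>r\<rceil>) r) i \<le> m (n + nat \<lceil>r\<rceil>) r i"
      using m_decay[OF r idx_ok[OF r]] by blast
  qed
qed

lemma sig_pos: "0 < r \<Longrightarrow> 0 < sig r i"
proof -
  assume r: "0 < r"
  obtain e where e: "e > 0" "\<And>N. r \<le> real (Suc N) \<Longrightarrow> e \<le> m N r i" using m_lower_pos[OF r, of i] by blast
  have "e \<le> m (0 + nat \<lceil>r\<rceil>) r i" using e(2) idx_ok[of r 0] r by simp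
  also have "\<dots> \<le> sig r i" by (rule sig_ge_m) (use r in auto)
  finally show ?thesis using e(1) by linarith
qed

lemma sig_big: "\<exists>r0\<ge>0. \<forall>r\<ge>r0. M \<le> sig r i"
proof -
  obtain r0 where r0: "\<And>r N. r0 \<le> r \<and> 0 \<le> r \<and> r \<le> real (Suc N) \<Longrightarrow> M \<le> m N r i"
    using m_lower_big[of M i] by blast
  show ?thesis
  proof (intro exI[of _ "max r0 0"] conjI allI impI)
    fix r assume r: "max r0 0 \<le> r"
    have "M \<le> m (0 + nat \<lceil>r\<rceil>) r i" using r0 idx_ok[of r 0] r by auto
    also have "\<dots> \<le> sig r i" by (rule sig_ge_m) (use r in auto)
    finally show "M \<le> sig r i" .
  qed simp
qed

end

lemma Incr_cong: "Incr f a b c C \<Longrightarrow> (\<And>x. a \<le> x \<Longrightarrow> x \<le> b \<Longrightarrow> f x = g x) \<Longrightarrow> Incr g a b c C"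
proof -
  assume I: "Incr f a b c C" and fg: "\<And>x. a \<le> x \<Longrightarrow> x \<le> b \<Longrightarrow> f x = g x"
  show ?thesis unfolding Incr_def
  proof (intro allI impI)
    fix x y assume xy: "a \<le> x" "x \<le> y" "y \<le> b"
    have "f x = g x" "f y = g y" using fg xy by auto
    then show "c * (y - x) \<le> g y - g x \<and> g y - g x \<le> C * (y - x)" using I xy unfolding Incr_def by metis
  qed
qed

context GSN
begin

definition kap_i :: "'i \<Rightarrow> real" where
  "kap_i i = (if 0 < G (sig 1) i then \<rho> (G (sig 1) i) / 2 else sig 1 i)"

definition kap :: real where "kap = Min (range kap_i)"

lemma kap_i_pos: "0 < kap_i i"
  unfolding kap_i_def using Kinf_pos[OF rho] sig_pos[of 1 i] by auto

lemma kap_pos: "0 < kap"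
  unfolding kap_def using kap_i_pos by (subst Min_gr_iff) auto

lemma kap_le: "kap \<le> kap_i i"
  unfolding kap_def by (rule Min_le) auto

lemma margin:
  assumes r: "1 \<le> r"
  shows "T (1/2) (sig r) i + kap \<le> sig r i"
proof (cases "0 < G (sig 1) i")
  case True
  have s1: "nonneg (sig 1)" by (rule sig_nonneg) simp
  have "G (sig 1) i \<le> G (sig r) i" by (rule G_mono[OF s1]) (use sig_mono r in auto)
  then have "\<rho> (G (sig 1) i) \<le> \<rho> (G (sig r) i)" by (rule Kinf_mono[OF rho G_nonneg])
  then have "kap \<le> \<rho> (G (sig r) i) / 2" using kap_le[of i] True unfolding kap_i_def by simp
  moreover have "T 1 (sig r) i \<le> sig r i" by (rule sig_decay) (use r in auto)
  ultimately show ?thesis unfolding T_def by simp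
next
  case False
  have "Iset i = {}"
  proof (rule ccontr)
    assume "Iset i \<noteq> {}"
    then obtain a where a: "a \<in> Iset i" by blast
    have "0 < xi (gam i a (sig 1 a))"
      using Kinf_pos[OF xi(1) Kinf_pos[OF gam_Kinf[OF a] sig_pos[of 1 a]]] by simp
    also have "\<dots> \<le> G (sig 1) i" by (rule G_lower[OF sig_nonneg a]) simp
    finally show False using False by simp
  qed
  then have "G (sig r) i = 0" by (rule G_empty)
  then have "T (1/2) (sig r) i = 0" unfolding T_def using Kinf_D(2)[OF rho] by simp
  moreover have "kap \<le> sig 1 i" using kap_le[of i] False unfolding kap_i_def by simp
  moreover have "sig 1 i \<le> sig r i" by (rule sig_mono) (use r in auto)
  ultimately show ?thesis by simp
qed

definition tau :: "real \<Rightarrow> 'i \<Rightarrow> real" where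
  "tau r i = sig r i - kap / (1 + r)"

lemma tau_bounds:
  assumes r: "1 \<le> r"
  shows "T (1/2) (sig r) i + kap / 2 \<le> tau r i" "tau r i \<le> sig r i"
proof -
  have "kap / (1 + r) \<le> kap / 2" using kap_pos r by (intro divide_left_mono) auto
  then show "T (1/2) (sig r) i + kap / 2 \<le> tau r i" unfolding tau_def using margin[OF r, of i] by linarith
  show "tau r i \<le> sig r i" unfolding tau_def using kap_pos r by simp
qed

lemma tau_pos: "1 \<le> r \<Longrightarrow> 0 < tau r i"
  using tau_bounds(1)[of r i] T_nonneg[of "1/2" "sig r" i] kap_pos by linarith

lemma tau_nonneg: "1 \<le> r \<Longrightarrow> nonneg (tau r)"
  unfolding nonneg_def using tau_pos by (auto intro: less_imp_le)

lemma tau_decay: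
  assumes r: "1 \<le> r"
  shows "T (1/2) (tau r) i \<le> tau r i"
proof -
  have "T (1/2) (tau r) i \<le> T (1/2) (sig r) i"
    by (rule T_mono) (use tau_nonneg[OF r] tau_bounds(2)[OF r] in auto)
  also have "\<dots> \<le> tau r i" using tau_bounds(1)[OF r, of i] kap_pos by linarith
  finally show ?thesis .
qed

lemma tau_Incr:
  assumes b: "1 \<le> b"
  shows "Incr (\<lambda>r. tau r i) 1 b (kap / (1 + b)^2) (1 + kap)"
  unfolding Incr_def
proof (intro allI impI)
  fix x y assume xy: "1 \<le> x" "x \<le> y" "y \<le> b"
  have d: "kap / (1 + x) - kap / (1 + y) = kap * (y - x) / ((1 + x) * (1 + y))"
    using xy by (simp add: field_simps)
  have pp: "0 < (1 + x) * (1 + y)" using xy by simp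
  have "(1 + x) * (1 + y) \<le> (1 + b)^2" using xy by (simp add: power2_eq_square mult_mono)
  then have lo: "kap * (y - x) / (1 + b)^2 \<le> kap * (y - x) / ((1 + x) * (1 + y))"
    using kap_pos xy pp by (intro divide_left_mono) auto
  have "4 \<le> (1 + x) * (1 + y)" using xy by (simp add: mult_mono[of 2 "1+x" 2 "1+y", simplified])
  then have hi: "kap * (y - x) / ((1 + x) * (1 + y)) \<le> kap * (y - x) / 4"
    using kap_pos xy by (intro divide_left_mono) auto
  have "kap * (y - x) / 4 \<le> kap * (y - x)" using kap_pos xy by simp
  have s1: "0 \<le> sig y i - sig x i" using sig_mono[of x y i] xy by simp
  have s2: "sig y i - sig x i \<le> y - x" using sig_lip[of x y i] xy by simp
  have e: "tau y i - tau x i = (sig y i - sig x i) + kap * (y - x) / ((1 + x) * (1 + y))"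
    unfolding tau_def using d by simp
  show "kap / (1 + b)\<^sup>2 * (y - x) \<le> tau y i - tau x i \<and> tau y i - tau x i \<le> (1 + kap) * (y - x)"
  proof
    show "kap / (1 + b)\<^sup>2 * (y - x) \<le> tau y i - tau x i" using e lo s1 by simp
    have eq: "(1 + kap) * (y - x) = (y - x) + kap * (y - x)" by (simp add: algebra_simps)
    show "tau y i - tau x i \<le> (1 + kap) * (y - x)"
      using e hi s2 \<open>kap * (y - x) / 4 \<le> kap * (y - x)\<close> eq by linarith
  qed
qed

definition cl :: "nat \<Rightarrow> real" where "cl k = 1/4 + 1 / 2^(k+2)"

lemma cl_0: "cl 0 = 1/2" unfolding cl_def by simp
lemma cl_ge: "1/4 \<le> cl k" unfolding cl_def by simp
lemma cl_le: "cl k \<le> 1/2"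
proof -
  have "(4::real) \<le> 2^(k+2)" using power_increasing[of 2 "k+2" "2::real"] by simp
  then have "1 / 2^(k+2) \<le> (1::real) / 4" by (intro divide_left_mono) auto
  then show ?thesis unfolding cl_def by linarith
qed
lemma cl_dec: "cl (Suc k) < cl k" unfolding cl_def by (simp add: field_simps)

primrec zl :: "nat \<Rightarrow> 'i \<Rightarrow> real" where
  "zl 0 = tau 1"
| "zl (Suc k) = (\<lambda>i. max (T (cl (Suc k)) (zl k) i) (zl k i / 2))"

lemma zl_inv: "nonneg (zl k) \<and> (\<forall>i. 0 < zl k i) \<and> (\<forall>i. T (cl k) (zl k) i \<le> zl k i)"
proof (induction k)
  case 0
  show ?case unfolding zl.simps cl_0 using tau_nonneg[of 1] tau_pos[of 1] tau_decay[of 1] by simp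
next
  case (Suc k)
  define s where "s = zl k"
  have s: "nonneg s" "\<And>i. 0 < s i" "\<And>i. T (cl k) s i \<le> s i" using Suc unfolding s_def by auto
  have c: "0 \<le> cl (Suc k)" using cl_ge[of "Suc k"] by linarith
  have e: "zl (Suc k) = (\<lambda>i. max (T (cl (Suc k)) s i) (s i / 2))" unfolding s_def by simp
  have le: "max (T (cl (Suc k)) s i) (s i / 2) \<le> s i" for i
  proof -
    have "T (cl (Suc k)) s i \<le> T (cl k) s i" by (rule T_cmono[OF c]) (use cl_dec[of k] in linarith)
    then show ?thesis using s(2,3)[of i] by simp
  qed
  have pos: "0 < max (T (cl (Suc k)) s i) (s i / 2)" for i using s(2)[of i] by simp
  have nn: "nonneg (\<lambda>i. max (T (cl (Suc k)) s i) (s i / 2))" unfolding nonneg_def using pos by (auto intro: less_imp_le)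
  have dec: "T (cl (Suc k)) (\<lambda>i. max (T (cl (Suc k)) s i) (s i / 2)) i \<le> max (T (cl (Suc k)) s i) (s i / 2)" for i
  proof -
    have "T (cl (Suc k)) (\<lambda>i. max (T (cl (Suc k)) s i) (s i / 2)) i \<le> T (cl (Suc k)) s i"
      by (rule T_mono[OF c nn le])
    then show ?thesis by simp
  qed
  show ?case unfolding e using nn pos dec by blast
qed

lemma zl_strict: "zl (Suc k) i < zl k i"
proof -
  have s: "nonneg (zl k)" "0 < zl k i" "T (cl k) (zl k) i \<le> zl k i" using zl_inv[of k] by auto
  have c: "0 \<le> cl (Suc k)" using cl_ge[of "Suc k"] by linarith
  have "T (cl (Suc k)) (zl k) i < zl k i"
  proof (cases "0 < G (zl k) i")
    case True
    then have "T (cl (Suc k)) (zl k) i < T (cl k) (zl k) i" by (intro T_cstrict c cl_dec)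
    then show ?thesis using s(3) by linarith
  next
    case False
    then have "G (zl k) i = 0" using G_nonneg[of "zl k" i] by linarith
    then have "T (cl (Suc k)) (zl k) i = 0" unfolding T_def using Kinf_D(2)[OF rho] by simp
    then show ?thesis using s(2) by simp
  qed
  then show ?thesis using s(2) by simp
qed

lemma zl_lim: "(\<lambda>k. zl k i) \<longlonglongrightarrow> 0"
proof (rule descent_to_zero[of zl "1/2"])
  show "\<And>k. nonneg (zl k)" using zl_inv by blast
  show "\<And>k i. zl (Suc k) i \<le> zl k i" using zl_strict less_imp_le by blast
  show "\<And>k i. zl (Suc k) i \<le> max (T (1/2) (zl k) i) (zl k i / 2)"
  proof -
    fix k i
    have "T (cl (Suc k)) (zl k) i \<le> T (1/2) (zl k) i" by (rule T_cmono) (use cl_ge cl_le in \<open>auto intro: order_trans[of 0 "1/4"]\<close>)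
    then show "zl (Suc k) i \<le> max (T (1/2) (zl k) i) (zl k i / 2)" by auto
  qed
qed auto

lemma zl_seg:
  assumes "\<And>i. zl (Suc k) i \<le> y i" "\<And>i. y i \<le> zl k i"
  shows "T (1/4) y i \<le> y i"
proof -
  have c: "0 \<le> cl (Suc k)" using cl_ge[of "Suc k"] by linarith
  have yn: "nonneg y" unfolding nonneg_def
  proof
    fix i have "0 \<le> zl (Suc k) i" using zl_inv[of "Suc k"] unfolding nonneg_def by blast
    then show "0 \<le> y i" using assms(1)[of i] by linarith
  qed
  have "T (1/4) y i \<le> T (cl (Suc k)) y i" by (rule T_cmono) (use cl_ge in auto)
  also have "\<dots> \<le> y i"
  proof (rule seg_decay[OF c _ assms])
    show "nonneg (zl (Suc k))" using zl_inv by blast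
    show "\<And>i. T (cl (Suc k)) (zl k) i \<le> zl (Suc k) i" by simp
  qed
  finally show ?thesis .
qed

definition tt :: "nat \<Rightarrow> real" where "tt k = (1/2)^k"

lemma PL_tl: "PL tt zl"
proof
  show "\<And>j. tt (Suc j) < tt j" unfolding tt_def by simp
  show "\<And>j. 0 < tt j" unfolding tt_def by simp
  show "tt \<longlonglongrightarrow> 0" unfolding tt_def by (rule LIMSEQ_power_zero) simp
  show "\<And>j i. zl (Suc j) i \<le> zl j i" using zl_strict less_imp_le by blast
  show "\<And>j i. 0 \<le> zl j i" using zl_inv unfolding nonneg_def by blast
qed

interpretation ZL: PL tt zl by (rule PL_tl)

lemma tl_0: "tt 0 = 1" unfolding tt_def by simp

definition pth :: "real \<Rightarrow> 'i \<Rightarrow> real" where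
  "pth r = (if r \<le> 1 then poly tt zl r else tau r)"

lemma pth_1: "pth 1 = tau 1"
proof -
  have "poly tt zl 1 i = zl 0 i" for i using ZL.poly_t[of 0 i] tl_0 by simp
  then show ?thesis unfolding pth_def by auto
qed

lemma pth_0: "r \<le> 0 \<Longrightarrow> pth r = (\<lambda>_. 0)"
  unfolding pth_def poly_def by simp

lemma pth_decay:
  assumes r: "0 \<le> r"
  shows "T (1/4) (pth r) i \<le> pth r i"
proof (cases "r \<le> 1")
  case True
  show ?thesis
  proof (cases "r = 0")
    case True
    then show ?thesis using pth_0[of r] T_zero by simp
  next
    case False
    then obtain j where j: "tt (Suc j) < r" "r \<le> tt j" using ZL.poly_piece[of r] r True tl_0 by auto
    have "pth r = poly tt zl r" unfolding pth_def using True by simp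
    then show ?thesis using zl_seg[of j "pth r" i] ZL.poly_between[of j r] j by auto
  qed
next
  case False
  then have e: "pth r = tau r" unfolding pth_def by simp
  have "T (1/4) (tau r) i \<le> T (1/2) (tau r) i" by (rule T_cmono) auto
  also have "\<dots> \<le> tau r i" by (rule tau_decay) (use False in auto)
  finally show ?thesis unfolding e .
qed

lemma pth_pos: "0 < r \<Longrightarrow> 0 < pth r i"
proof (cases "r \<le> 1")
  case True
  assume r: "0 < r"
  obtain j where j: "tt (Suc j) < r" "r \<le> tt j" using ZL.poly_piece[of r] r True tl_0 by auto
  have "zl (Suc j) i \<le> poly tt zl r i" using ZL.poly_between[of j r i] j by auto
  moreover have "0 < zl (Suc j) i" using zl_inv[of "Suc j"] by blast
  ultimately have "0 < poly tt zl r i" by linarith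
  then show ?thesis unfolding pth_def using True by auto
next
  case False
  then show ?thesis unfolding pth_def using tau_pos[of r i] by auto
qed

lemma pth_near_Incr:
  assumes a: "0 < a" "a \<le> 1"
  shows "\<exists>c C. 0 < c \<and> c \<le> C \<and> Incr (\<lambda>r. pth r i) a 1 c C"
proof -
  obtain j0 where "tt j0 < a" using ZL.t_small[OF a(1)] by blast
  then have J: "tt (Suc j0) \<le> a" using ZL.t_dec[of j0] by linarith
  define c where "c = Min ((\<lambda>j. ZL.slope j i) ` {..j0})"
  define C where "C = Max ((\<lambda>j. ZL.slope j i) ` {..j0})"
  have slope_pos: "0 < ZL.slope j i" for j
    unfolding ZL.slope_def using zl_strict[of j i] ZL.t_dec[of j] by simp
  have c: "0 < c" unfolding c_def using slope_pos by (subst Min_gr_iff) auto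
  have cj: "c \<le> ZL.slope j i" "ZL.slope j i \<le> C" if "j \<le> j0" for j
    unfolding c_def C_def using that by (auto intro: Min_le Max_ge)
  have cC: "c \<le> C" using cj[of 0] by simp
  have "Incr (\<lambda>r. poly tt zl r i) (tt (Suc j0)) (tt 0) c C" by (rule ZL.poly_Incr) (use cj in auto)
  then have "Incr (\<lambda>r. poly tt zl r i) a 1 c C" by (rule Incr_weaken) (use J tl_0 in auto)
  then have "Incr (\<lambda>r. pth r i) a 1 c C" by (rule Incr_cong) (auto simp: pth_def)
  then show ?thesis using c cC by blast
qed

lemma pth_far_Incr:
  assumes b: "1 \<le> b"
  shows "Incr (\<lambda>r. pth r i) 1 b (kap / (1 + b)^2) (1 + kap)"
proof (rule Incr_cong[OF tau_Incr[OF b]])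
  fix x assume "1 \<le> x" "x \<le> b"
  then show "tau x i = pth x i" using pth_1 unfolding pth_def by (cases "x = 1") auto
qed

lemma pth_Incr:
  assumes ab: "0 < a" "a \<le> b"
  shows "\<exists>c C. 0 < c \<and> c \<le> C \<and> Incr (\<lambda>r. pth r i) a b c C"
proof -
  have far_c: "0 < kap / (1 + b')^2" "kap / (1 + b')^2 \<le> 1 + kap" if "1 \<le> b'" for b'
  proof -
    show "0 < kap / (1 + b')^2" using kap_pos that by simp
    have "1 * 1 \<le> (1 + b') * (1 + b')" using that by (intro mult_mono) auto
    then have "1 \<le> (1 + b')^2" by (simp add: power2_eq_square)
    then have "kap / (1 + b')^2 \<le> kap" using kap_pos by (simp add: divide_le_eq)
    then show "kap / (1 + b')^2 \<le> 1 + kap" by linarith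
  qed
  show ?thesis
  proof (cases "b \<le> 1")
    case True
    obtain c C where cC: "0 < c" "c \<le> C" "Incr (\<lambda>r. pth r i) a 1 c C" using pth_near_Incr[of a i] ab True by auto
    have "Incr (\<lambda>r. pth r i) a b c C" by (rule Incr_weaken[OF cC(3)]) (use True in auto)
    then show ?thesis using cC by blast
  next
    case False
    show ?thesis
    proof (cases "1 \<le> a")
      case True
      have "Incr (\<lambda>r. pth r i) a b (kap / (1 + b)^2) (1 + kap)"
        by (rule Incr_weaken[OF pth_far_Incr[of b i]]) (use True ab False in auto)
      then show ?thesis using far_c[of b] False by auto
    next
      case False2: False
      obtain c C where cC: "0 < c" "c \<le> C" "Incr (\<lambda>r. pth r i) a 1 c C" using pth_near_Incr[of a i] ab False2 by auto
      define c' where "c' = min c (kap / (1 + b)^2)"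
      define C' where "C' = max C (1 + kap)"
      have 1: "Incr (\<lambda>r. pth r i) a 1 c' C'" by (rule Incr_weaken[OF cC(3)]) (auto simp: c'_def C'_def)
      have 2: "Incr (\<lambda>r. pth r i) 1 b c' C'" by (rule Incr_weaken[OF pth_far_Incr[of b i]]) (use False in \<open>auto simp: c'_def C'_def\<close>)
      have "Incr (\<lambda>r. pth r i) a b c' C'" by (rule Incr_join[OF 1 2]) (use False False2 in auto)
      moreover have "0 < c'" "c' \<le> C'" using cC far_c[of b] False unfolding c'_def C'_def by auto
      ultimately show ?thesis by blast
    qed
  qed
qed

end

lemma Kinf_sum:
  fixes g :: "'i::finite \<Rightarrow> real \<Rightarrow> real"
  assumes g: "\<And>i. Kinf (g i)"
  shows "Kinf (\<lambda>r. sum (\<lambda>i. g i r) UNIV)"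
proof -
  have "continuous_on {0..} (\<lambda>r. sum (\<lambda>i. g i r) UNIV)"
    by (intro continuous_on_sum) (use Kinf_D(1)[OF g] in auto)
  moreover have "strict_mono_on {0..} (\<lambda>r. sum (\<lambda>i. g i r) UNIV)"
    unfolding strict_mono_on_def monotone_on_def
  proof (intro ballI impI)
    fix x y :: real assume "x \<in> {0..}" "y \<in> {0..}" "x < y"
    then show "sum (\<lambda>i. g i x) UNIV < sum (\<lambda>i. g i y) UNIV"
      using Kinf_less[OF g] by (intro sum_strict_mono) auto
  qed
  moreover have "sum (\<lambda>i. g i 0) UNIV = 0" using Kinf_D(2)[OF g] by simp
  moreover have "\<exists>r\<ge>0. M \<le> sum (\<lambda>i. g i r) UNIV" for M
  proof -
    fix i0 :: 'i
    obtain r where r: "r \<ge> 0" "M \<le> g i0 r" using Kinf_D(4)[OF g] by blast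
    have "g i0 r \<le> sum (\<lambda>i. g i r) UNIV"
      by (rule member_le_sum) (use Kinf_nonneg[OF g r(1)] in auto)
    then show ?thesis using r by (intro exI[of _ r]) auto
  qed
  ultimately show ?thesis unfolding Kinf_def by blast
qed

lemma Kinf_min:
  fixes g :: "'i::finite \<Rightarrow> real \<Rightarrow> real"
  assumes g: "\<And>i. Kinf (g i)"
  shows "Kinf (\<lambda>r. Min (range (\<lambda>i. g i r)))"
proof -
  define m where "m r = Min (range (\<lambda>i. g i r))" for r
  have m_le: "m r \<le> g i r" for r i unfolding m_def by (rule Min_le) auto
  have m_in: "\<exists>i. m r = g i r" for r
  proof -
    have "m r \<in> range (\<lambda>i. g i r)" unfolding m_def by (rule Min_in) auto
    then show ?thesis by auto
  qed
  have cont: "continuous_on {0..} m"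
    unfolding continuous_on_iff
  proof (intro ballI allI impI)
    fix x e :: real assume x: "x \<in> {0..}" and e: "0 < e"
    have "\<exists>d>0. \<forall>y\<ge>0. \<bar>y - x\<bar> < d \<longrightarrow> \<bar>g i y - g i x\<bar> < e" for i
      using Kinf_cont[OF g _ e] x by auto
    then obtain d where d: "\<forall>i. d i > 0 \<and> (\<forall>y\<ge>0. \<bar>y - x\<bar> < d i \<longrightarrow> \<bar>g i y - g i x\<bar> < e)"
      using choice[of "\<lambda>i d. d > 0 \<and> (\<forall>y\<ge>0. \<bar>y - x\<bar> < d \<longrightarrow> \<bar>g i y - g i x\<bar> < e)"] by blast
    define d0 where "d0 = Min (range d)"
    have d0: "d0 > 0" unfolding d0_def using d by (subst Min_gr_iff) auto
    have d0le: "d0 \<le> d i" for i unfolding d0_def by (rule Min_le) auto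
    show "\<exists>d>0. \<forall>y\<in>{0..}. dist y x < d \<longrightarrow> dist (m y) (m x) < e"
    proof (intro exI[of _ d0] conjI ballI impI d0)
      fix y assume y: "y \<in> {0..}" "dist y x < d0"
      have close: "\<bar>g i y - g i x\<bar> < e" for i
      proof -
        have "\<bar>y - x\<bar> < d i" using y(2) d0le[of i] by (simp add: dist_real_def)
        then show ?thesis using d y(1) by auto
      qed
      obtain k where k: "m x = g k x" using m_in by blast
      obtain j where j: "m y = g j y" using m_in by blast
      have "m y \<le> g k y" by (rule m_le)
      then have 1: "m y < m x + e" using close[of k] k by linarith
      have "m x \<le> g j x" by (rule m_le)
      then have 2: "m x - e < m y" using close[of j] j by linarith
      show "dist (m y) (m x) < e" using 1 2 by (simp add: dist_real_def abs_less_iff)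
    qed
  qed
  have smono: "strict_mono_on {0..} m"
    unfolding strict_mono_on_def monotone_on_def
  proof (intro ballI impI)
    fix x y :: real assume xy: "x \<in> {0..}" "y \<in> {0..}" "x < y"
    obtain j where j: "m y = g j y" using m_in by blast
    have "g j x < g j y" using Kinf_less[OF g] xy by auto
    then show "m x < m y" using m_le[of x j] j by linarith
  qed
  have m0: "m 0 = 0"
  proof -
    obtain j where "m 0 = g j 0" using m_in by blast
    then show ?thesis using Kinf_D(2)[OF g] by simp
  qed
  have unb: "\<exists>r\<ge>0. M \<le> m r" for M
  proof -
    obtain r where r: "\<forall>i. r i \<ge> 0 \<and> M \<le> g i (r i)"
      using choice[of "\<lambda>i r. r \<ge> 0 \<and> M \<le> g i r"] Kinf_D(4)[OF g] by blast
    define R where "R = Max (range r)"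
    have rR: "r i \<le> R" for i unfolding R_def by (rule Max_ge) auto
    have R0: "0 \<le> R"
    proof -
      have "0 \<le> r undefined" using r by blast
      then show ?thesis using rR[of undefined] by linarith
    qed
    have "M \<le> g i R" for i
    proof -
      have ri: "0 \<le> r i" "M \<le> g i (r i)" using r by auto
      have "g i (r i) \<le> g i R" by (rule Kinf_mono[OF g ri(1) rR[of i]])
      then show ?thesis using ri by linarith
    qed
    moreover obtain j where "m R = g j R" using m_in by blast
    ultimately show ?thesis using R0 by (intro exI[of _ R]) auto
  qed
  show ?thesis unfolding Kinf_def m_def[symmetric] using cont smono m0 unb by blast
qed

lemma Kinf_inj: "Kinf g \<Longrightarrow> inj_on g {0..}"
  unfolding Kinf_def by (auto intro: strict_mono_on_imp_inj_on)

lemma Kinf_img: "Kinf g \<Longrightarrow> 0 \<le> y \<Longrightarrow> y \<in> g ` {0..}"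
  using Kinf_surj[of g y] by auto

lemma Kinf_inv:
  assumes g: "Kinf g" and y: "0 \<le> y"
  shows "0 \<le> the_inv_into {0..} g y" "g (the_inv_into {0..} g y) = y"
proof -
  show "0 \<le> the_inv_into {0..} g y" using the_inv_into_into[OF Kinf_inj[OF g] Kinf_img[OF g y], of "{0..}"] by simp
  show "g (the_inv_into {0..} g y) = y" by (rule f_the_inv_into_f[OF Kinf_inj[OF g] Kinf_img[OF g y]])
qed

lemma Kinf_inv_le:
  assumes g: "Kinf g" and y: "0 \<le> y1" "y1 \<le> y2"
  shows "the_inv_into {0..} g y1 \<le> the_inv_into {0..} g y2"
proof (rule ccontr)
  assume "\<not> ?thesis"
  then have "the_inv_into {0..} g y2 < the_inv_into {0..} g y1" by simp
  then have "g (the_inv_into {0..} g y2) < g (the_inv_into {0..} g y1)"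
    using Kinf_less[OF g] Kinf_inv(1)[OF g, of y2] y by auto
  then show False using Kinf_inv(2)[OF g, of y1] Kinf_inv(2)[OF g, of y2] y by auto
qed

lemma Kinf_inv_pos:
  assumes g: "Kinf g" and y: "0 < y"
  shows "0 < the_inv_into {0..} g y"
proof -
  have "the_inv_into {0..} g y \<noteq> 0"
    using Kinf_inv(2)[OF g, of y] Kinf_D(2)[OF g] y by auto
  then show ?thesis using Kinf_inv(1)[OF g, of y] y by auto
qed

lemma bilip_inv:
  assumes g: "Kinf g"
    and loc: "\<And>a b. 0 < a \<Longrightarrow> a \<le> b \<Longrightarrow> \<exists>c C. 0 < c \<and> c \<le> C \<and> Incr g a b c C"
    and K: "compact K" "K \<subseteq> {0<..}"
  shows "\<exists>c C. 0 < c \<and> c \<le> C \<and> (\<forall>r1\<in>K. \<forall>r2\<in>K.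
      c * \<bar>the_inv_into {0..} g r1 - the_inv_into {0..} g r2\<bar> \<le> \<bar>r1 - r2\<bar> \<and>
      \<bar>r1 - r2\<bar> \<le> C * \<bar>the_inv_into {0..} g r1 - the_inv_into {0..} g r2\<bar>)"
proof (cases "K = {}")
  case True
  then show ?thesis by (intro exI[of _ 1]) auto
next
  case False
  define inv where "inv = the_inv_into {0..} g"
  obtain lo where lo: "lo \<in> K" "\<And>t. t \<in> K \<Longrightarrow> lo \<le> t" using compact_attains_inf[OF K(1) False] by blast
  obtain hi where hi: "hi \<in> K" "\<And>t. t \<in> K \<Longrightarrow> t \<le> hi" using compact_attains_sup[OF K(1) False] by blast
  have lo0: "0 < lo" using lo K(2) by auto
  have a: "0 < inv lo" unfolding inv_def by (rule Kinf_inv_pos[OF g lo0])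
  have ab: "inv lo \<le> inv hi" unfolding inv_def by (rule Kinf_inv_le[OF g]) (use lo0 lo hi in auto)
  obtain c C where cC: "0 < c" "c \<le> C" "Incr g (inv lo) (inv hi) c C" using loc[OF a ab] by blast
  have key: "c * (inv r2 - inv r1) \<le> r2 - r1 \<and> r2 - r1 \<le> C * (inv r2 - inv r1) \<and> inv r1 \<le> inv r2"
    if r: "r1 \<in> K" "r2 \<in> K" "r1 \<le> r2" for r1 r2
  proof -
    have r10: "0 \<le> r1" "0 \<le> r2" using r K(2) by auto
    have i12: "inv r1 \<le> inv r2" unfolding inv_def by (rule Kinf_inv_le[OF g r10(1) r(3)])
    have i1: "inv lo \<le> inv r1" unfolding inv_def by (rule Kinf_inv_le[OF g]) (use lo0 lo r in auto)
    have i2: "inv r2 \<le> inv hi" unfolding inv_def by (rule Kinf_inv_le[OF g]) (use r10 hi r in auto)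
    have "c * (inv r2 - inv r1) \<le> g (inv r2) - g (inv r1) \<and> g (inv r2) - g (inv r1) \<le> C * (inv r2 - inv r1)"
      using cC(3) i1 i12 i2 unfolding Incr_def by blast
    moreover have "g (inv r1) = r1" "g (inv r2) = r2" unfolding inv_def using Kinf_inv(2)[OF g] r10 by auto
    ultimately show ?thesis using i12 by simp
  qed
  have all: "\<forall>r1\<in>K. \<forall>r2\<in>K. c * \<bar>the_inv_into {0..} g r1 - the_inv_into {0..} g r2\<bar> \<le> \<bar>r1 - r2\<bar> \<and>
          \<bar>r1 - r2\<bar> \<le> C * \<bar>the_inv_into {0..} g r1 - the_inv_into {0..} g r2\<bar>"
  proof (intro ballI)
    fix r1 r2 assume r: "r1 \<in> K" "r2 \<in> K"
    show "c * \<bar>the_inv_into {0..} g r1 - the_inv_into {0..} g r2\<bar> \<le> \<bar>r1 - r2\<bar> \<and>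
          \<bar>r1 - r2\<bar> \<le> C * \<bar>the_inv_into {0..} g r1 - the_inv_into {0..} g r2\<bar>"
    proof (cases "r1 \<le> r2")
      case True
      then show ?thesis using key[OF r True] unfolding inv_def by (simp add: abs_minus_commute)
    next
      case False
      then show ?thesis using key[OF r(2,1)] unfolding inv_def by simp
    qed
  qed
  show ?thesis
    apply (rule exI[of _ c], rule exI[of _ C])
    using cC(1,2) all by simp
qed

context GSN
begin

interpretation ZL: PL tt zl by (rule PL_tl)

lemma pth_nn: "0 \<le> r \<Longrightarrow> 0 \<le> pth r i"
proof (cases "r = 0")
  case True then show ?thesis using pth_0[of r] by simp
next
  case False
  assume "0 \<le> r"
  then have "0 < r" using False by simp
  then show ?thesis using pth_pos[of r i] by simp
qed

lemma pth_lip_at: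
  assumes x0: "0 < x"
  shows "\<exists>C>0. \<forall>y. x/2 \<le> y \<and> y \<le> x + 1 \<longrightarrow> \<bar>pth y i - pth x i\<bar> \<le> C * \<bar>y - x\<bar>"
proof -
  obtain c C where cC: "0 < c" "c \<le> C" "Incr (\<lambda>r. pth r i) (x/2) (x+1) c C"
    using pth_Incr[of "x/2" "x+1" i] x0 by auto
  have "\<bar>pth y i - pth x i\<bar> \<le> C * \<bar>y - x\<bar>" if y: "x/2 \<le> y" "y \<le> x + 1" for y
  proof (cases "x \<le> y")
    case True
    have "c * (y - x) \<le> pth y i - pth x i" "pth y i - pth x i \<le> C * (y - x)"
      using cC(3) y True x0 unfolding Incr_def by auto
    moreover have "0 \<le> c * (y - x)" using cC True by simp
    ultimately show ?thesis using True by simp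
  next
    case False
    have "c * (x - y) \<le> pth x i - pth y i" "pth x i - pth y i \<le> C * (x - y)"
      using cC(3) y False x0 unfolding Incr_def by auto
    moreover have "0 \<le> c * (x - y)" using cC False by simp
    ultimately show ?thesis using False by (simp add: abs_minus_commute)
  qed
  then show ?thesis using cC by (intro exI[of _ C]) auto
qed

lemma pth_Kinf: "Kinf (\<lambda>r. pth r i)"
proof -
  have cont: "continuous_on {0..} (\<lambda>r. pth r i)"
    unfolding continuous_on_iff
  proof (intro ballI allI impI)
    fix x e :: real assume x: "x \<in> {0..}" and e: "0 < e"
    show "\<exists>d>0. \<forall>y\<in>{0..}. dist y x < d \<longrightarrow> dist (pth y i) (pth x i) < e"
    proof (cases "x = 0")
      case True
      have "eventually (\<lambda>k. dist (zl k i) 0 < e) sequentially" using zl_lim[of i] e by (simp add: tendsto_iff)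
      then obtain N where "\<forall>n\<ge>N. dist (zl n i) 0 < e" unfolding eventually_sequentially by blast
      then have "dist (zl N i) 0 < e" by simp
      then have k: "zl N i < e" by (simp add: dist_real_def abs_less_iff)
      have tk0: "0 < tt N" by (rule ZL.t_pos)
      have tk: "tt N \<le> 1" using ZL.t_anti[of 0 N] tl_0 by simp
      have px: "pth x i = 0" using pth_0[of x] True by simp
      have "\<forall>y\<in>{0..}. dist y x < tt N \<longrightarrow> dist (pth y i) (pth x i) < e"
      proof (intro ballI impI)
        fix y assume y: "y \<in> {0..}" "dist y x < tt N"
        have y1: "0 \<le> y" "y \<le> tt N" using y True by (auto simp: dist_real_def)
        have "pth y i = poly tt zl y i" unfolding pth_def using y1 tk by simp
        also have "\<dots> \<le> zl N i" by (rule ZL.poly_le_z[OF y1])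
        finally have up: "pth y i \<le> zl N i" .
        have "0 \<le> pth y i" by (rule pth_nn[OF y1(1)])
        then show "dist (pth y i) (pth x i) < e" using up k px by (simp add: dist_real_def)
      qed
      then show ?thesis using tk0 by blast
    next
      case False
      then have x0: "0 < x" using x by simp
      obtain C where C: "C > 0" "\<And>y. x/2 \<le> y \<Longrightarrow> y \<le> x + 1 \<Longrightarrow> \<bar>pth y i - pth x i\<bar> \<le> C * \<bar>y - x\<bar>"
        using pth_lip_at[OF x0, of i] by blast
      define d where "d = min (min (x/2) 1) (e / (C + 1))"
      have d: "0 < d" unfolding d_def using x0 e C by auto
      have dle1: "d \<le> x/2" unfolding d_def by (rule min.coboundedI1, rule min.cobounded1)
      have dle2: "d \<le> 1" unfolding d_def by (rule min.coboundedI1, rule min.cobounded2)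
      have dle3: "d \<le> e / (C + 1)" unfolding d_def by (rule min.cobounded2)
      note dle = dle1 dle2 dle3
      have "\<forall>y\<in>{0..}. dist y x < d \<longrightarrow> dist (pth y i) (pth x i) < e"
      proof (intro ballI impI)
        fix y assume y: "y \<in> {0..}" "dist y x < d"
        have yx: "\<bar>y - x\<bar> < d" using y(2) by (simp add: dist_real_def)
        then have yr: "x/2 \<le> y" "y \<le> x + 1" using dle by (auto simp: abs_less_iff)
        have 1: "\<bar>pth y i - pth x i\<bar> \<le> C * \<bar>y - x\<bar>" by (rule C(2)[OF yr])
        have 2: "C * \<bar>y - x\<bar> \<le> C * d" using yx C by (intro mult_left_mono) auto
        have 3: "C * d < (C + 1) * d" using d by simp
        have "(C + 1) * d \<le> (C + 1) * (e / (C + 1))" using dle(3) C by (intro mult_left_mono) auto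
        also have "\<dots> = e" using C by simp
        finally have 4: "(C + 1) * d \<le> e" .
        show "dist (pth y i) (pth x i) < e" using 1 2 3 4 by (simp add: dist_real_def)
      qed
      then show ?thesis using d by blast
    qed
  qed
  have smono: "strict_mono_on {0..} (\<lambda>r. pth r i)"
    unfolding strict_mono_on_def monotone_on_def
  proof (intro ballI impI)
    fix x y :: real assume xy: "x \<in> {0..}" "y \<in> {0..}" "x < y"
    show "pth x i < pth y i"
    proof (cases "x = 0")
      case True
      then show ?thesis using pth_0[of x] pth_pos[of y i] xy by auto
    next
      case False
      then have x0: "0 < x" using xy by simp
      obtain c C where cC: "0 < c" "c \<le> C" "Incr (\<lambda>r. pth r i) x y c C"
        using pth_Incr[of x y i] x0 xy by auto
      then have "c * (y - x) \<le> pth y i - pth x i" unfolding Incr_def using xy by auto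
      moreover have "0 < c * (y - x)" using cC xy by simp
      ultimately show ?thesis by linarith
    qed
  qed
  have p0: "pth 0 i = 0" using pth_0[of 0] by simp
  have unb: "\<exists>r\<ge>0. M \<le> pth r i" for M
  proof -
    obtain r0 where r0: "r0 \<ge> 0" "\<And>r. r \<ge> r0 \<Longrightarrow> M + kap \<le> sig r i" using sig_big[of "M + kap" i] by blast
    define r where "r = max r0 2"
    have r: "r \<ge> r0" "1 < r" unfolding r_def by auto
    have "kap / (1 + r) \<le> kap" using kap_pos r by (simp add: divide_le_eq)
    then have "M \<le> tau r i" unfolding tau_def using r0(2)[OF r(1)] by linarith
    then show ?thesis unfolding pth_def using r by (intro exI[of _ r]) auto
  qed
  show ?thesis unfolding Kinf_def using cont smono p0 unb by blast
qed

lemma pth_path: "path_strict_decay Iset gam mu pth"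
  unfolding path_strict_decay_def
proof (intro conjI)
  show "\<exists>\<rho>'. Kinf \<rho>' \<and> (\<forall>r\<ge>0. \<forall>i. Gam_rho \<rho>' Iset gam mu (pth r) i \<le> pth r i)"
  proof (intro exI[of _ "\<lambda>x. (1/4) * \<rho> x"] conjI)
    show "Kinf (\<lambda>x. (1/4) * \<rho> x)" by (rule Kinf_scale[OF rho]) simp
    show "\<forall>r\<ge>0. \<forall>i. Gam_rho (\<lambda>x. (1/4) * \<rho> x) Iset gam mu (pth r) i \<le> pth r i"
      unfolding T_rho using pth_decay by auto
  qed
  show "\<exists>\<phi>min \<phi>max. Kinf \<phi>min \<and> Kinf \<phi>max \<and> (\<forall>r\<ge>0. \<forall>i. \<phi>min r \<le> pth r i \<and> pth r i \<le> \<phi>max r)"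
  proof (rule exI[of _ "\<lambda>r. Min (range (\<lambda>i. pth r i))"], rule exI[of _ "\<lambda>r. sum (\<lambda>i. pth r i) UNIV"], intro conjI allI impI)
    show "Kinf (\<lambda>r. Min (range (\<lambda>i. pth r i)))" by (rule Kinf_min[OF pth_Kinf])
    show "Kinf (\<lambda>r. sum (\<lambda>i. pth r i) UNIV)" by (rule Kinf_sum[OF pth_Kinf])
    fix r :: real and i assume r: "0 \<le> r"
    show "Min (range (\<lambda>i. pth r i)) \<le> pth r i" by (rule Min_le) auto
    show "pth r i \<le> sum (\<lambda>i. pth r i) UNIV"
      by (rule member_le_sum) (use Kinf_nonneg[OF pth_Kinf r] in auto)
  qed
  show "\<forall>i. Kinf (\<lambda>r. pth r i)" using pth_Kinf by blast
  show "\<forall>K. compact K \<and> K \<subseteq> {0<..} \<longrightarrow>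
        (\<exists>l L. 0 < l \<and> l \<le> L \<and> (\<forall>r1\<in>K. \<forall>r2\<in>K. \<forall>i.
           l * \<bar>r1 - r2\<bar> \<le> \<bar>the_inv_into {0..} (\<lambda>r. pth r i) r1 - the_inv_into {0..} (\<lambda>r. pth r i) r2\<bar>
         \<and> \<bar>the_inv_into {0..} (\<lambda>r. pth r i) r1 - the_inv_into {0..} (\<lambda>r. pth r i) r2\<bar> \<le> L * \<bar>r1 - r2\<bar>))"
  proof (intro allI impI)
    fix K :: "real set" assume K: "compact K \<and> K \<subseteq> {0<..}"
    define BL where "BL i c C \<longleftrightarrow> 0 < c \<and> c \<le> C \<and> (\<forall>r1\<in>K. \<forall>r2\<in>K.
      c * \<bar>the_inv_into {0..} (\<lambda>r. pth r i) r1 - the_inv_into {0..} (\<lambda>r. pth r i) r2\<bar> \<le> \<bar>r1 - r2\<bar> \<and>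
      \<bar>r1 - r2\<bar> \<le> C * \<bar>the_inv_into {0..} (\<lambda>r. pth r i) r1 - the_inv_into {0..} (\<lambda>r. pth r i) r2\<bar>)" for i c C
    have ex: "\<forall>i. \<exists>c. \<exists>C. BL i c C"
    proof
      fix i
      show "\<exists>c C. BL i c C" unfolding BL_def by (rule bilip_inv[OF pth_Kinf]) (use pth_Incr K in auto)
    qed
    from choice[OF ex] obtain c where c: "\<forall>i. \<exists>C. BL i (c i) C" ..
    from choice[OF c] obtain C where C: "\<forall>i. BL i (c i) (C i)" ..
    have cC: "\<forall>i. 0 < c i \<and> c i \<le> C i \<and> (\<forall>r1\<in>K. \<forall>r2\<in>K.
      c i * \<bar>the_inv_into {0..} (\<lambda>r. pth r i) r1 - the_inv_into {0..} (\<lambda>r. pth r i) r2\<bar> \<le> \<bar>r1 - r2\<bar> \<and>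
      \<bar>r1 - r2\<bar> \<le> C i * \<bar>the_inv_into {0..} (\<lambda>r. pth r i) r1 - the_inv_into {0..} (\<lambda>r. pth r i) r2\<bar>)"
      using C unfolding BL_def by blast
    define l where "l = Min (range (\<lambda>i. 1 / C i))"
    define L where "L = Max (range (\<lambda>i. 1 / c i))"
    have Cpos: "0 < C i" for i
    proof -
      have "0 < c i" "c i \<le> C i" using cC by auto
      then show ?thesis by linarith
    qed
    have l: "0 < l" unfolding l_def using Cpos by (subst Min_gr_iff) auto
    have li: "l \<le> 1 / C i" for i unfolding l_def by (rule Min_le) auto
    have Li: "1 / c i \<le> L" for i unfolding L_def by (rule Max_ge) auto
    have lL: "l \<le> L"
    proof -
      fix i0 :: 'i
      have c0: "0 < c i0" "c i0 \<le> C i0" using cC by auto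
      have "1 / C i0 \<le> 1 / c i0" using c0 by (intro divide_left_mono) auto
      then show ?thesis using li[of i0] Li[of i0] by linarith
    qed
    show "\<exists>l L. 0 < l \<and> l \<le> L \<and> (\<forall>r1\<in>K. \<forall>r2\<in>K. \<forall>i.
           l * \<bar>r1 - r2\<bar> \<le> \<bar>the_inv_into {0..} (\<lambda>r. pth r i) r1 - the_inv_into {0..} (\<lambda>r. pth r i) r2\<bar>
         \<and> \<bar>the_inv_into {0..} (\<lambda>r. pth r i) r1 - the_inv_into {0..} (\<lambda>r. pth r i) r2\<bar> \<le> L * \<bar>r1 - r2\<bar>)"
    proof (rule exI[of _ l], rule exI[of _ L], intro conjI l lL ballI allI)
      fix r1 r2 i assume r: "r1 \<in> K" "r2 \<in> K"
      define D where "D = \<bar>the_inv_into {0..} (\<lambda>r. pth r i) r1 - the_inv_into {0..} (\<lambda>r. pth r i) r2\<bar>"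
      have h: "c i * D \<le> \<bar>r1 - r2\<bar>" "\<bar>r1 - r2\<bar> \<le> C i * D" using cC r unfolding D_def by auto
      have ci: "0 < c i" using cC by blast
      have "l * \<bar>r1 - r2\<bar> \<le> (1 / C i) * \<bar>r1 - r2\<bar>" using li[of i] by (intro mult_right_mono) auto
      also have "\<dots> \<le> (1 / C i) * (C i * D)" using h(2) Cpos[of i] by (intro mult_left_mono) auto
      also have "\<dots> = D" using Cpos[of i] by simp
      finally show "l * \<bar>r1 - r2\<bar> \<le> D" unfolding D_def .
      have "D = (1 / c i) * (c i * D)" using ci by simp
      also have "\<dots> \<le> (1 / c i) * \<bar>r1 - r2\<bar>" using h(1) ci by (intro mult_left_mono) auto
      also have "\<dots> \<le> L * \<bar>r1 - r2\<bar>" using Li[of i] by (intro mult_right_mono) auto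
      finally show "D \<le> L * \<bar>r1 - r2\<bar>" .
    qed
  qed
qed

end

context GS
begin

lemma path_imp_NJI:
  assumes p: "path_strict_decay Iset gam mu \<sigma>"
  shows "\<exists>\<rho>. Kinf \<rho> \<and> NJI (Gam_rho \<rho> Iset gam mu)"
proof -
  note p' = p[unfolded path_strict_decay_def]
  from p'[THEN conjunct1] obtain \<rho> where rho0: "Kinf \<rho> \<and> (\<forall>r\<ge>0. \<forall>i. Gam_rho \<rho> Iset gam mu (\<sigma> r) i \<le> \<sigma> r i)" ..
  have rho: "Kinf \<rho>" using rho0 by (rule conjunct1)
  have dec: "\<And>r i. r \<ge> 0 \<Longrightarrow> Gam_rho \<rho> Iset gam mu (\<sigma> r) i \<le> \<sigma> r i" using rho0 by simp
  have sK0: "\<forall>i. Kinf (\<lambda>r. \<sigma> r i)" by (rule p'[THEN conjunct2, THEN conjunct2, THEN conjunct1])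
  have sK: "Kinf (\<lambda>r. \<sigma> r i)" for i using sK0 by (rule spec)
  define \<rho>2 where "\<rho>2 = (\<lambda>x. (1/2) * \<rho> x)"
  have rho2: "Kinf \<rho>2" unfolding \<rho>2_def by (rule Kinf_scale[OF rho]) simp
  have "NJI (Gam_rho \<rho>2 Iset gam mu)"
    unfolding NJI_def
  proof
    assume "\<exists>s. nonneg s \<and> s \<noteq> (\<lambda>_. 0) \<and> (\<forall>i. s i \<le> Gam_rho \<rho>2 Iset gam mu s i)"
    then obtain s where s: "nonneg s" "s \<noteq> (\<lambda>_. 0)" "\<And>i. s i \<le> Gam_rho \<rho>2 Iset gam mu s i" by blast
    have s0: "0 \<le> s i" for i using s(1) unfolding nonneg_def by auto
    obtain rr where rr: "\<forall>i. rr i \<ge> 0 \<and> \<sigma> (rr i) i = s i"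
      using choice[of "\<lambda>i r. r \<ge> 0 \<and> \<sigma> r i = s i"] Kinf_surj[OF sK s0] by blast
    define R where "R = Max (range rr)"
    have rrR: "rr i \<le> R" for i unfolding R_def by (rule Max_ge) auto
    obtain k where k: "rr k = R"
    proof -
      have "R \<in> range rr" unfolding R_def by (rule Max_in) auto
      then show ?thesis using that by auto
    qed
    have R0: "0 \<le> R" using rr k by auto
    have ge: "s i \<le> \<sigma> R i" for i
    proof -
      have ri: "0 \<le> rr i" "\<sigma> (rr i) i = s i" using rr by auto
      have "\<sigma> (rr i) i \<le> \<sigma> R i" by (rule Kinf_mono[OF sK ri(1) rrR[of i]])
      then show ?thesis using ri by simp
    qed
    have sk: "\<sigma> R k = s k" using rr k by auto
    obtain j where j: "0 < s j"
    proof -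
      obtain j where "s j \<noteq> 0" using s(2) by auto
      then show ?thesis using that s0[of j] by (intro that[of j]) linarith
    qed
    have "rr j \<noteq> 0"
    proof
      assume "rr j = 0"
      moreover have "\<sigma> (rr j) j = s j" using rr by blast
      ultimately have "s j = \<sigma> 0 j" by simp
      also have "\<dots> = 0" using Kinf_D(2)[OF sK[of j]] .
      finally show False using j by simp
    qed
    moreover have "0 \<le> rr j" using rr by auto
    ultimately have "0 < rr j" by linarith
    then have R: "0 < R" using rrR[of j] by linarith
    have skpos: "0 < s k" using sk Kinf_pos[OF sK R, of k] by simp
    define g where "g = Gam Iset gam mu (\<sigma> R) k"
    define g' where "g' = Gam Iset gam mu s k"
    have g'g: "g' \<le> g" unfolding g_def g'_def by (rule G_mono[OF s(1) ge])
    have g'0: "0 \<le> g'" unfolding g'_def by (rule G_nonneg)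
    have "s k \<le> g' + (1/2) * \<rho> g'" using s(3)[of k] unfolding Gam_rho_def \<rho>2_def g'_def by simp
    also have "\<dots> \<le> g + (1/2) * \<rho> g" using g'g Kinf_mono[OF rho g'0 g'g] by simp
    finally have 1: "s k \<le> g + (1/2) * \<rho> g" .
    have 2: "g + \<rho> g \<le> s k" using dec[OF R0, of k] sk unfolding Gam_rho_def g_def by simp
    have g0: "0 \<le> g" using g'0 g'g by linarith
    have "\<rho> g \<le> 0" using 1 2 by linarith
    then have "\<rho> g = 0" using Kinf_nonneg[OF rho g0] by linarith
    then have "g = 0" using Kinf_zero_iff[OF rho g0] by simp
    then show False using 1 skpos Kinf_D(2)[OF rho] by simp
  qed
  then show ?thesis using rho2 by blast
qed

end

theorem theorem4p13:
  fixes Iset :: "'i::finite \<Rightarrow> 'i set"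
    and gam :: "'i \<Rightarrow> 'i \<Rightarrow> real \<Rightarrow> real"
    and mu :: "'i \<Rightarrow> ('i \<Rightarrow> real) \<Rightarrow> ennreal"
  assumes "gain_operator Iset gam mu"
    and "strongly_connected Iset"
  shows "(\<exists>\<sigma>. path_strict_decay Iset gam mu \<sigma>) \<longleftrightarrow>
         (\<exists>\<rho>. Kinf \<rho> \<and> NJI (Gam_rho \<rho> Iset gam mu))"
proof
  assume "\<exists>\<sigma>. path_strict_decay Iset gam mu \<sigma>"
  then obtain \<sigma> where p: "path_strict_decay Iset gam mu \<sigma>" by blast
  interpret GS Iset gam mu by (rule GS.intro[OF assms(1)])
  show "\<exists>\<rho>. Kinf \<rho> \<and> NJI (Gam_rho \<rho> Iset gam mu)" by (rule path_imp_NJI[OF p])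
next
  assume "\<exists>\<rho>. Kinf \<rho> \<and> NJI (Gam_rho \<rho> Iset gam mu)"
  then obtain \<rho> where r: "Kinf \<rho>" "NJI (Gam_rho \<rho> Iset gam mu)" by blast
  interpret N: GSN Iset gam mu \<rho>
    by (intro GSN.intro GS.intro GSN_axioms.intro assms r)
  show "\<exists>\<sigma>. path_strict_decay Iset gam mu \<sigma>" using N.pth_path by blast
qed


end
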